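(* Fix $k,d\in\mathbb{N}=\{1,2,\dots\}$ and a real number $\alpha>2$. Let $G$ be a graph with $\operatorname{tw}(G)\leq k-1$ and $\Delta(G)\leq d$. Then $G$ has a tree-partition $(B_x:x\in V(T))$ of width at most $\frac{3\alpha(\alpha-1)}{\alpha-2}kd-\frac{\alpha}{\alpha-2}k$ such that $\Delta(T)\leq \frac{3\alpha}{\alpha-2}d+\frac{\alpha-4}{\alpha-2}$. Moreover, for any set $S\subseteq V(G)$ with $\alpha k\leq |S|\leq 3\alpha kd$, there exists a tree-partition $(B_x:x\in V(T))$ of $G$ of width at most $\frac{3\alpha(\alpha-1)}{\alpha-2}kd-\frac{\alpha}{\alpha-2}k$ such that $\Delta(T)\leq \frac{3\alpha}{\alpha-2}d+\frac{\alpha-4}{\alpha-2}$ and there exists a node $z\in V(T)$ such that: $S\subseteq B_z$; $|B_z|\leq \frac{\alpha-1}{\alpha-2}|S|-\frac{\alpha}{\alpha-2}k$; and $\deg_T(z)\leq \frac{1}{(\alpha-2)k}|S|-\frac{2}{\alpha-2}$.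
   Context: All graphs are finite and simple. $\Delta(G)$ denotes the maximum degree of $G$, and $\operatorname{tw}(G)$ its treewidth. For a graph $G$ and a tree $T$, a $T$-partition of $G$ is a family $(B_x : x\in V(T))$ of pairwise disjoint subsets of $V(G)$ (some possibly empty) with union $V(G)$, indexed by the nodes of $T$, such that for every edge $vw$ of $G$, if $v\in B_x$ and $w\in B_y$ then $x=y$ or $xy\in E(T)$. A tree-partition of $G$ is a $T$-partition for some tree $T$. The width of a $T$-partition is $\max\{|B_x| : x\in V(T)\}$. *)

theory Defs
  imports Complex_Main
begin

definition sgraph :: "'a set \<Rightarrow> 'a set set \<Rightarrow> bool" where
  "sgraph V E \<longleftrightarrow> finite V \<and> (\<forall>e\<in>E. \<exists>u v. u \<in> V \<and> v \<in> V \<and> u \<noteq> v \<and> e = {u, v})"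

definition degree :: "'a set set \<Rightarrow> 'a \<Rightarrow> nat" where
  "degree E v = card {u. {v, u} \<in> E}"

definition max_degree_le :: "'a set \<Rightarrow> 'a set set \<Rightarrow> real \<Rightarrow> bool" where
  "max_degree_le V E D \<longleftrightarrow> (\<forall>v\<in>V. real (degree E v) \<le> D)"

definition connected_in :: "'a set set \<Rightarrow> 'a set \<Rightarrow> bool" where
  "connected_in E S \<longleftrightarrow>
     (\<forall>x\<in>S. \<forall>y\<in>S. (x, y) \<in> {(u, w). u \<in> S \<and> w \<in> S \<and> {u, w} \<in> E}\<^sup>*)"

definition is_cycle :: "'a set set \<Rightarrow> 'a list \<Rightarrow> bool" where
  "is_cycle E cs \<longleftrightarrow> length cs \<ge> 3 \<and> distinct cs \<and>
     (\<forall>i. Suc i < length cs \<longrightarrow> {cs ! i, cs ! Suc i} \<in> E) \<and> {last cs, hd cs} \<in> E"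

definition is_tree :: "'b set \<Rightarrow> 'b set set \<Rightarrow> bool" where
  "is_tree VT ET \<longleftrightarrow> sgraph VT ET \<and> VT \<noteq> {} \<and> connected_in ET VT \<and> (\<nexists>cs. is_cycle ET cs)"

definition tree_decomposition :: "'a set \<Rightarrow> 'a set set \<Rightarrow> 'b set \<Rightarrow> 'b set set \<Rightarrow> ('b \<Rightarrow> 'a set) \<Rightarrow> bool" where
  "tree_decomposition V E VT ET W \<longleftrightarrow> is_tree VT ET \<and>
     (\<forall>x\<in>VT. W x \<subseteq> V) \<and>
     (\<forall>v\<in>V. \<exists>x\<in>VT. v \<in> W x) \<and>
     (\<forall>e\<in>E. \<exists>x\<in>VT. e \<subseteq> W x) \<and>
     (\<forall>v\<in>V. connected_in ET {x\<in>VT. v \<in> W x})"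

definition treewidth_le :: "'a set \<Rightarrow> 'a set set \<Rightarrow> nat \<Rightarrow> bool" where
  "treewidth_le V E w \<longleftrightarrow>
     (\<exists>(VT :: nat set) ET W. tree_decomposition V E VT ET W \<and> (\<forall>x\<in>VT. card (W x) \<le> w + 1))"

definition T_partition :: "'a set \<Rightarrow> 'a set set \<Rightarrow> 'b set \<Rightarrow> 'b set set \<Rightarrow> ('b \<Rightarrow> 'a set) \<Rightarrow> bool" where
  "T_partition V E VT ET B \<longleftrightarrow>
     (\<forall>x\<in>VT. \<forall>y\<in>VT. x \<noteq> y \<longrightarrow> B x \<inter> B y = {}) \<and>
     (\<Union>x\<in>VT. B x) = V \<and>
     (\<forall>v w x y. {v, w} \<in> E \<and> x \<in> VT \<and> y \<in> VT \<and> v \<in> B x \<and> w \<in> B y \<longrightarrow> x = y \<or> {x, y} \<in> ET)"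

definition tree_partition :: "'a set \<Rightarrow> 'a set set \<Rightarrow> 'b set \<Rightarrow> 'b set set \<Rightarrow> ('b \<Rightarrow> 'a set) \<Rightarrow> bool" where
  "tree_partition V E VT ET B \<longleftrightarrow> is_tree VT ET \<and> T_partition V E VT ET B"

definition width_le :: "'b set \<Rightarrow> ('b \<Rightarrow> 'a set) \<Rightarrow> real \<Rightarrow> bool" where
  "width_le VT B w \<longleftrightarrow> (\<forall>x\<in>VT. real (card (B x)) \<le> w)"

end

theory Submission
  imports Defs
begin

definition rel :: "'b set set \<Rightarrow> 'b set \<Rightarrow> ('b \<times> 'b) set" where
  "rel E U = {(u, w). u \<in> U \<and> w \<in> U \<and> {u, w} \<in> E}"

lemma connected_in_rel: "connected_in E S \<longleftrightarrow> (\<forall>x\<in>S. \<forall>y\<in>S. (x, y) \<in> (rel E S)\<^sup>*)"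
  unfolding connected_in_def rel_def by simp

lemma rel_sym: "(a, b) \<in> rel E U \<Longrightarrow> (b, a) \<in> rel E U"
  unfolding rel_def by (auto simp: insert_commute)

lemma rel_conv: "(rel E U)\<inverse> = rel E U"
  using rel_sym by auto

lemma rel_rtrancl_sym: "(a, b) \<in> (rel E U)\<^sup>* \<Longrightarrow> (b, a) \<in> (rel E U)\<^sup>*"
  by (metis rel_conv rtrancl_converseI)

lemma rel_mono: "E \<subseteq> E' \<Longrightarrow> U \<subseteq> U' \<Longrightarrow> (a, b) \<in> (rel E U)\<^sup>* \<Longrightarrow> (a, b) \<in> (rel E' U')\<^sup>*"
proof -
  assume "E \<subseteq> E'" "U \<subseteq> U'"
  then have "rel E U \<subseteq> rel E' U'" unfolding rel_def by auto
  then show "(a, b) \<in> (rel E U)\<^sup>* \<Longrightarrow> (a, b) \<in> (rel E' U')\<^sup>*" by (meson rtrancl_mono subsetD)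
qed

lemma rtrancl_distinct_path:
  assumes "(a, b) \<in> R\<^sup>*"
  shows "\<exists>p. p \<noteq> [] \<and> hd p = a \<and> last p = b \<and> distinct p \<and>
     (\<forall>i. Suc i < length p \<longrightarrow> (p ! i, p ! Suc i) \<in> R) \<and> set p \<subseteq> insert a (Range R)"
  using assms
proof (induction rule: rtrancl_induct)
  case base
  then show ?case by (intro exI[of _ "[a]"]) auto
next
  case (step y z)
  then obtain p where p: "p \<noteq> []" "hd p = a" "last p = y" "distinct p"
    "\<forall>i. Suc i < length p \<longrightarrow> (p ! i, p ! Suc i) \<in> R" "set p \<subseteq> insert a (Range R)" by blast
  show ?case
  proof (cases "z \<in> set p")
    case True
    then obtain j where j: "j < length p" "p ! j = z" by (meson in_set_conv_nth)
    define q where "q = take (Suc j) p"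
    have q1: "q \<noteq> []" using j p(1) unfolding q_def by simp
    have q2: "hd q = a" using p(1,2) unfolding q_def by (simp add: hd_take)
    have q3: "last q = z"
    proof -
      have lq: "length q = Suc j" using j unfolding q_def by simp
      then have "last q = q ! j" by (metis diff_Suc_1 last_conv_nth list.size(3) nat.distinct(1))
      also have "\<dots> = p ! j" unfolding q_def by simp
      finally show ?thesis using j by simp
    qed
    have q4: "distinct q" using p(4) unfolding q_def by simp
    have q5: "\<forall>i. Suc i < length q \<longrightarrow> (q ! i, q ! Suc i) \<in> R"
    proof (intro allI impI)
      fix i assume "Suc i < length q"
      then have "Suc i < length p" "Suc i < Suc j" unfolding q_def by auto
      then show "(q ! i, q ! Suc i) \<in> R" using p(5) unfolding q_def by simp
    qed
    have q6: "set q \<subseteq> insert a (Range R)" using p(6) set_take_subset[of "Suc j" p] unfolding q_def by (rule order_trans[rotated])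
    show ?thesis by (rule exI[of _ q], intro conjI q1 q2 q3 q4 q5 q6)
  next
    case False
    define q where "q = p @ [z]"
    have "\<forall>i. Suc i < length q \<longrightarrow> (q ! i, q ! Suc i) \<in> R"
    proof (intro allI impI)
      fix i assume i: "Suc i < length q"
      show "(q ! i, q ! Suc i) \<in> R"
      proof (cases "Suc i < length p")
        case True then show ?thesis using p(5) unfolding q_def by (simp add: nth_append)
      next
        case False
        then have "Suc i = length p" using i unfolding q_def by simp
        then have ii: "i = length p - 1" by simp
        have "q ! i = y" using p(1,3) ii unfolding q_def by (simp add: nth_append last_conv_nth)
        moreover have "q ! Suc i = z" using \<open>Suc i = length p\<close> unfolding q_def by (simp add: nth_append)
        ultimately have "q ! i = y" "q ! Suc i = z" by auto
        then show ?thesis using step(2) by simp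
      qed
    qed
    moreover have "set q \<subseteq> insert a (Range R)" using p(6) step(2) unfolding q_def by auto
    moreover have "q \<noteq> []" "hd q = a" "last q = z" "distinct q"
      using p(1,2,4) False unfolding q_def by auto
    ultimately show ?thesis by (intro exI[of _ q]) simp
  qed
qed

lemma path_rtrancl:
  assumes "p \<noteq> []" "\<forall>i. Suc i < length p \<longrightarrow> {p ! i, p ! Suc i} \<in> E" "set p \<subseteq> U"
  shows "(hd p, last p) \<in> (rel E U)\<^sup>*"
  using assms
proof (induction p)
  case Nil then show ?case by simp
next
  case (Cons x p)
  show ?case
  proof (cases "p = []")
    case True then show ?thesis by simp
  next
    case False
    have "(hd p, last p) \<in> (rel E U)\<^sup>*"
      using Cons.IH[OF False] Cons.prems by force
    moreover have "{x, hd p} \<in> E" using Cons.prems(2)[rule_format, of 0] False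
      by (simp add: hd_conv_nth)
    then have "(x, hd p) \<in> rel E U" using Cons.prems(3) False unfolding rel_def by auto
    ultimately show ?thesis using False by simp
  qed
qed

lemma sgraph_edge: "sgraph V E \<Longrightarrow> {a, b} \<in> E \<Longrightarrow> a \<in> V \<and> b \<in> V"
  unfolding sgraph_def by (metis doubleton_eq_iff)

lemma dnth: "distinct xs \<Longrightarrow> i < length xs \<Longrightarrow> j < length xs \<Longrightarrow> i \<noteq> j \<Longrightarrow> xs ! i \<noteq> xs ! j"
  by (simp add: nth_eq_iff_index_eq)

lemma tree_edge_cut:
  assumes T: "is_tree VT ET" and e: "{x, y} \<in> ET" and xy: "x \<noteq> y"
  shows "(x, y) \<notin> (rel (ET - {{x, y}}) VT)\<^sup>*"
proof
  assume "(x, y) \<in> (rel (ET - {{x, y}}) VT)\<^sup>*"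
  from rtrancl_distinct_path[OF this] obtain p where p: "p \<noteq> []" "hd p = x" "last p = y" "distinct p"
    "\<forall>i. Suc i < length p \<longrightarrow> (p ! i, p ! Suc i) \<in> rel (ET - {{x, y}}) VT"
    by (elim exE conjE) (rule that)
  have "length p \<noteq> 1"
  proof
    assume "length p = 1"
    then have "hd p = last p" using p(1) by (simp add: hd_conv_nth last_conv_nth)
    then show False using p xy by simp
  qed
  moreover have "length p \<noteq> 2"
  proof
    assume l2: "length p = 2"
    then have "p ! 0 = x" "p ! 1 = y" using p(1-3) by (auto simp: hd_conv_nth last_conv_nth)
    moreover have "(p ! 0, p ! Suc 0) \<in> rel (ET - {{x, y}}) VT" using p(5) l2 by simp
    ultimately show False unfolding rel_def by simp
  qed
  moreover have "length p \<noteq> 0" using p(1) by simp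
  ultimately have l3: "length p \<ge> 3" by linarith
  have st: "\<forall>i. Suc i < length p \<longrightarrow> {p ! i, p ! Suc i} \<in> ET"
  proof (intro allI impI)
    fix i assume "Suc i < length p"
    then have "(p ! i, p ! Suc i) \<in> rel (ET - {{x, y}}) VT" using p(5) by blast
    then show "{p ! i, p ! Suc i} \<in> ET" unfolding rel_def by simp
  qed
  have "{last p, hd p} \<in> ET" using e p(2,3) by (simp add: insert_commute)
  then have "is_cycle ET p"
    unfolding is_cycle_def using l3 p(4) st by simp
  then show False using T unfolding is_tree_def by blast
qed

lemma no_cycle_crit:
  assumes sg: "sgraph VT ET"
    and crit: "\<And>u v. {u, v} \<in> ET \<Longrightarrow> u \<noteq> v \<Longrightarrow> (u, v) \<notin> (rel (ET - {{u, v}}) VT)\<^sup>*"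
  shows "\<nexists>cs. is_cycle ET cs"
proof
  assume "\<exists>cs. is_cycle ET cs"
  then obtain cs where c: "is_cycle ET cs" by blast
  define n where "n = length cs"
  have n3: "n \<ge> 3" and dcs: "distinct cs" and ed: "\<forall>i. Suc i < n \<longrightarrow> {cs ! i, cs ! Suc i} \<in> ET"
    and el: "{last cs, hd cs} \<in> ET" using c unfolding is_cycle_def n_def by auto
  have ne: "cs \<noteq> []" using n3 n_def by auto
  have lastn: "last cs = cs ! (n - 1)" using ne n_def by (simp add: last_conv_nth)
  have hdn: "hd cs = cs ! 0" using ne by (simp add: hd_conv_nth)
  have "cs ! (n - 1) \<noteq> cs ! 0"
  proof
    assume "cs ! (n - 1) = cs ! 0"
    moreover have "n - 1 < length cs" "0 < length cs" using n3 n_def by auto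
    ultimately have "n - 1 = 0" using nth_eq_iff_index_eq[OF dcs] by blast
    then show False using n3 by simp
  qed
  then have uv: "last cs \<noteq> hd cs" using lastn hdn by simp
  have inV: "set cs \<subseteq> VT"
  proof
    fix a assume "a \<in> set cs"
    then obtain i where i: "i < n" "cs ! i = a" by (metis in_set_conv_nth n_def)
    show "a \<in> VT"
    proof (cases "Suc i < n")
      case True
      then have "{cs ! i, cs ! Suc i} \<in> ET" using ed by blast
      then show ?thesis using sgraph_edge[OF sg] i by blast
    next
      case False
      then have "i = n - 1" using i by simp
      then have "a = last cs" using i lastn by simp
      then show ?thesis using sgraph_edge[OF sg el] by blast
    qed
  qed
  have "\<forall>i. Suc i < length cs \<longrightarrow> {cs ! i, cs ! Suc i} \<in> ET - {{last cs, hd cs}}"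
  proof (intro allI impI)
    fix i assume i: "Suc i < length cs"
    have "{cs ! i, cs ! Suc i} \<noteq> {cs ! (n - 1), cs ! 0}"
    proof
      assume eq: "{cs ! i, cs ! Suc i} = {cs ! (n - 1), cs ! 0}"
      have "cs ! Suc i \<noteq> cs ! 0" using dnth[OF dcs, of "Suc i" 0] i ne by simp
      then have "cs ! Suc i = cs ! (n - 1)" using eq by blast
      then have "Suc i = n - 1" using dnth[OF dcs, of "Suc i" "n - 1"] i n_def by fastforce
      moreover have "cs ! i = cs ! 0"
      proof -
        have "cs ! i \<noteq> cs ! Suc i" using dnth[OF dcs, of i "Suc i"] i by simp
        then show ?thesis using eq \<open>cs ! Suc i = cs ! (n - 1)\<close> by (auto simp: doubleton_eq_iff)
      qed
      then have "i = 0" using dnth[OF dcs, of i 0] i by fastforce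
      ultimately show False using n3 by simp
    qed
    then show "{cs ! i, cs ! Suc i} \<in> ET - {{last cs, hd cs}}" using ed i n_def lastn hdn by auto
  qed
  then have "(hd cs, last cs) \<in> (rel (ET - {{last cs, hd cs}}) VT)\<^sup>*"
    using path_rtrancl[OF ne _ inV] by blast
  then have "(last cs, hd cs) \<in> (rel (ET - {{last cs, hd cs}}) VT)\<^sup>*" by (rule rel_rtrancl_sym)
  then show False using crit[OF el uv] by blast
qed

lemma tree_single: "is_tree {z} {}"
proof -
  have "sgraph {z} {}" unfolding sgraph_def by simp
  moreover have "connected_in {} {z}" unfolding connected_in_rel by simp
  moreover have "\<not> is_cycle {} cs" for cs
  proof
    assume "is_cycle {} cs"
    then show False unfolding is_cycle_def by simp
  qed
  ultimately show ?thesis unfolding is_tree_def by blast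
qed

lemma tree_edge: assumes "a \<noteq> b" shows "is_tree {a, b} {{a, b}}"
proof -
  have sg: "sgraph {a, b} {{a, b}}" unfolding sgraph_def using assms by blast
  have "(a, b) \<in> rel {{a, b}} {a, b}" unfolding rel_def by auto
  then have r1: "(a, b) \<in> (rel {{a, b}} {a, b})\<^sup>*" by (rule r_into_rtrancl)
  have r2: "(b, a) \<in> (rel {{a, b}} {a, b})\<^sup>*" using rel_rtrancl_sym[OF r1] .
  have "connected_in {{a, b}} {a, b}" unfolding connected_in_rel
    using r1 r2 by simp
  moreover have "\<nexists>cs. is_cycle {{a, b}} cs"
  proof (rule no_cycle_crit[OF sg])
    fix u v assume uv: "{u, v} \<in> {{a, b}}" "u \<noteq> v"
    then have "{{a, b}} - {{u, v}} = {}" by simp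
    moreover have "rel {} {a, b} = {}" unfolding rel_def by auto
    ultimately show "(u, v) \<notin> (rel ({{a, b}} - {{u, v}}) {a, b})\<^sup>*" using uv(2) by simp
  qed
  ultimately show ?thesis using sg unfolding is_tree_def by simp
qed

lemma tree_merge_cut:
  assumes T1: "is_tree V1 E1" and S2: "sgraph V2 E2" and int: "V1 \<inter> V2 = {z}"
    and e: "{u, v} \<in> E1" and uv: "u \<noteq> v"
  shows "(u, v) \<notin> (rel (E1 \<union> E2 - {{u, v}}) (V1 \<union> V2))\<^sup>*"
proof
  define pi where "pi n = (if n \<in> V1 then n else z)" for n
  have S1: "sgraph V1 E1" using T1 unfolding is_tree_def by simp
  have uV: "u \<in> V1" "v \<in> V1" using sgraph_edge[OF S1 e] by auto
  assume "(u, v) \<in> (rel (E1 \<union> E2 - {{u, v}}) (V1 \<union> V2))\<^sup>*"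
  moreover have "(pi u, pi t) \<in> (rel (E1 - {{u, v}}) V1)\<^sup>*"
    if "(u, t) \<in> (rel (E1 \<union> E2 - {{u, v}}) (V1 \<union> V2))\<^sup>*" for t
    using that
  proof (induction rule: rtrancl_induct)
    case base then show ?case by simp
  next
    case (step w w')
    have st: "{w, w'} \<in> E1 \<union> E2 - {{u, v}}" using step(2) unfolding rel_def by simp
    show ?case
    proof (cases "{w, w'} \<in> E1")
      case True
      then have "w \<in> V1" "w' \<in> V1" using sgraph_edge[OF S1] by auto
      then have "(pi w, pi w') \<in> rel (E1 - {{u, v}}) V1" using st True unfolding rel_def pi_def by simp
      then show ?thesis using step(3) by simp
    next
      case False
      then have "{w, w'} \<in> E2" using st by simp
      then have "w \<in> V2" "w' \<in> V2" using sgraph_edge[OF S2] by auto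
      then have "pi w = z" "pi w' = z" using int unfolding pi_def by auto
      then show ?thesis using step(3) by simp
    qed
  qed
  ultimately have "(pi u, pi v) \<in> (rel (E1 - {{u, v}}) V1)\<^sup>*" by blast
  then have "(u, v) \<in> (rel (E1 - {{u, v}}) V1)\<^sup>*" using uV unfolding pi_def by simp
  then show False using tree_edge_cut[OF T1 e uv] by simp
qed

lemma tree_merge:
  assumes T1: "is_tree V1 E1" and T2: "is_tree V2 E2" and int: "V1 \<inter> V2 = {z}"
  shows "is_tree (V1 \<union> V2) (E1 \<union> E2)"
proof -
  have S1: "sgraph V1 E1" and S2: "sgraph V2 E2" using T1 T2 unfolding is_tree_def by auto
  have sg: "sgraph (V1 \<union> V2) (E1 \<union> E2)" using S1 S2 unfolding sgraph_def by (metis UnE UnI1 UnI2 finite_UnI)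
  have z: "z \<in> V1" "z \<in> V2" using int by auto
  have c1: "\<forall>a\<in>V1. (a, z) \<in> (rel (E1 \<union> E2) (V1 \<union> V2))\<^sup>*"
  proof
    fix a assume "a \<in> V1"
    then have "(a, z) \<in> (rel E1 V1)\<^sup>*" using T1 z unfolding is_tree_def connected_in_rel by simp
    then show "(a, z) \<in> (rel (E1 \<union> E2) (V1 \<union> V2))\<^sup>*" by (rule rel_mono[rotated 2]) auto
  qed
  have c2: "\<forall>a\<in>V2. (a, z) \<in> (rel (E1 \<union> E2) (V1 \<union> V2))\<^sup>*"
  proof
    fix a assume "a \<in> V2"
    then have "(a, z) \<in> (rel E2 V2)\<^sup>*" using T2 z unfolding is_tree_def connected_in_rel by simp
    then show "(a, z) \<in> (rel (E1 \<union> E2) (V1 \<union> V2))\<^sup>*" by (rule rel_mono[rotated 2]) auto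
  qed
  have "connected_in (E1 \<union> E2) (V1 \<union> V2)" unfolding connected_in_rel
  proof (intro ballI)
    fix a b assume "a \<in> V1 \<union> V2" "b \<in> V1 \<union> V2"
    then have "(a, z) \<in> (rel (E1 \<union> E2) (V1 \<union> V2))\<^sup>*" "(b, z) \<in> (rel (E1 \<union> E2) (V1 \<union> V2))\<^sup>*"
      using c1 c2 by auto
    then show "(a, b) \<in> (rel (E1 \<union> E2) (V1 \<union> V2))\<^sup>*"
      using rel_rtrancl_sym[of b z] rtrancl_trans[of a z] by blast
  qed
  moreover have "\<nexists>cs. is_cycle (E1 \<union> E2) cs"
  proof (rule no_cycle_crit[OF sg])
    fix u v assume e: "{u, v} \<in> E1 \<union> E2" and uv: "u \<noteq> v"
    show "(u, v) \<notin> (rel (E1 \<union> E2 - {{u, v}}) (V1 \<union> V2))\<^sup>*"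
    proof (cases "{u, v} \<in> E1")
      case True then show ?thesis using tree_merge_cut[OF T1 S2 int True uv] by simp
    next
      case False
      then have "{u, v} \<in> E2" using e by simp
      from tree_merge_cut[OF T2 S1 _ this uv, of z] int show ?thesis by (simp add: Un_commute Int_commute)
    qed
  qed
  moreover have "V1 \<union> V2 \<noteq> {}" using z by auto
  ultimately show ?thesis using sg unfolding is_tree_def by simp
qed


lemma group_aux:
  fixes s :: real and K :: "'a \<Rightarrow> 'c"
  assumes fin: "finite S'" and small: "\<And>C. real (card {v\<in>S'. K v = C}) < s / 3"
  shows "finite Q \<Longrightarrow> real (card {v\<in>S'. K v \<in> Q}) \<le> s \<Longrightarrow>
    \<exists>A\<subseteq>Q. real (card {v\<in>S'. K v \<in> A}) \<le> 2 * s / 3 \<and> real (card {v\<in>S'. K v \<in> Q - A}) \<le> 2 * s / 3"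
proof (induction Q rule: finite_induct)
  case empty
  have "s \<ge> 0" using small[of undefined] by simp
  then show ?case by simp
next
  case (insert c Q)
  have split: "{v\<in>S'. K v \<in> insert c Q} = {v\<in>S'. K v = c} \<union> {v\<in>S'. K v \<in> Q}" by auto
  have disj: "{v\<in>S'. K v = c} \<inter> {v\<in>S'. K v \<in> Q} = {}" using insert(2) by auto
  have cardins: "card {v\<in>S'. K v \<in> insert c Q} = card {v\<in>S'. K v = c} + card {v\<in>S'. K v \<in> Q}"
    unfolding split using disj fin by (simp add: card_Un_disjoint)
  have "real (card {v\<in>S'. K v \<in> Q}) \<le> s" using insert(4) cardins by simp
  then obtain A where A: "A \<subseteq> Q" "real (card {v\<in>S'. K v \<in> A}) \<le> 2 * s / 3"
    "real (card {v\<in>S'. K v \<in> Q - A}) \<le> 2 * s / 3" using insert(3) by blast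
  have sp2: "card {v\<in>S'. K v \<in> Q} = card {v\<in>S'. K v \<in> A} + card {v\<in>S'. K v \<in> Q - A}"
  proof -
    have "{v\<in>S'. K v \<in> Q} = {v\<in>S'. K v \<in> A} \<union> {v\<in>S'. K v \<in> Q - A}" using A(1) by auto
    moreover have "{v\<in>S'. K v \<in> A} \<inter> {v\<in>S'. K v \<in> Q - A} = {}" by auto
    ultimately show ?thesis using fin by (simp add: card_Un_disjoint)
  qed
  have fc: "real (card {v\<in>S'. K v = c}) < s / 3" by (rule small)
  show ?case
  proof (cases "real (card {v\<in>S'. K v \<in> A}) + real (card {v\<in>S'. K v = c}) \<le> 2 * s / 3")
    case True
    have e1: "{v\<in>S'. K v \<in> insert c A} = {v\<in>S'. K v = c} \<union> {v\<in>S'. K v \<in> A}" by auto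
    have e2: "{v\<in>S'. K v = c} \<inter> {v\<in>S'. K v \<in> A} = {}" using insert(2) A(1) by auto
    have "card {v\<in>S'. K v \<in> insert c A} = card {v\<in>S'. K v = c} + card {v\<in>S'. K v \<in> A}"
      unfolding e1 using e2 fin by (simp add: card_Un_disjoint)
    moreover have "insert c Q - insert c A = Q - A" using insert(2) A(1) by auto
    ultimately show ?thesis using True A by (intro exI[of _ "insert c A"]) auto
  next
    case False
    have e1: "{v\<in>S'. K v \<in> insert c Q - A} = {v\<in>S'. K v = c} \<union> {v\<in>S'. K v \<in> Q - A}"
      using insert(2) A(1) by auto
    have e2: "{v\<in>S'. K v = c} \<inter> {v\<in>S'. K v \<in> Q - A} = {}" using insert(2) by auto
    have "card {v\<in>S'. K v \<in> insert c Q - A} = card {v\<in>S'. K v = c} + card {v\<in>S'. K v \<in> Q - A}"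
      unfolding e1 using e2 fin by (simp add: card_Un_disjoint)
    then have "real (card {v\<in>S'. K v \<in> insert c Q - A}) \<le> 2 * s / 3"
      using False insert(4) cardins sp2 fc by simp
    then show ?thesis using A by (intro exI[of _ A]) auto
  qed
qed

lemma grouping:
  fixes s :: real and K :: "'a \<Rightarrow> 'c"
  assumes fin: "finite S'" and half: "\<And>C. real (card {v\<in>S'. K v = C}) \<le> s / 2"
    and tot: "real (card S') \<le> s"
  shows "\<exists>P. real (card {v\<in>S'. P (K v)}) \<le> 2 * s / 3 \<and> real (card {v\<in>S'. \<not> P (K v)}) \<le> 2 * s / 3"
proof (cases "\<exists>C. real (card {v\<in>S'. K v = C}) \<ge> s / 3")
  case True
  then obtain C where C: "real (card {v\<in>S'. K v = C}) \<ge> s / 3" by blast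
  have "card {v\<in>S'. K v = C} + card {v\<in>S'. K v \<noteq> C} = card S'"
  proof -
    have "S' = {v\<in>S'. K v = C} \<union> {v\<in>S'. K v \<noteq> C}" by auto
    then show ?thesis using fin by (metis (no_types, lifting) card_Un_disjoint disjoint_iff finite_Un mem_Collect_eq)
  qed
  then have "real (card {v\<in>S'. K v \<noteq> C}) \<le> 2 * s / 3" using C tot by linarith
  moreover have "real (card {v\<in>S'. K v = C}) \<le> 2 * s / 3" using half[of C] C by linarith
  ultimately show ?thesis by (intro exI[of _ "\<lambda>D. D = C"]) simp
next
  case False
  then have sm: "\<And>C. real (card {v\<in>S'. K v = C}) < s / 3" by (meson not_le)
  have "{v\<in>S'. K v \<in> K ` S'} = S'" by auto
  then obtain A where A: "real (card {v\<in>S'. K v \<in> A}) \<le> 2 * s / 3"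
    "real (card {v\<in>S'. K v \<in> K ` S' - A}) \<le> 2 * s / 3"
    using group_aux[OF fin sm, of "K ` S'"] fin tot by auto
  have "{v\<in>S'. K v \<in> K ` S' - A} = {v\<in>S'. \<not> K v \<in> A}" by auto
  then show ?thesis using A by (intro exI[of _ "\<lambda>D. D \<in> A"]) simp
qed


lemma rel_class_eq: "(a, b) \<in> (rel E U)\<^sup>* \<Longrightarrow> (rel E U)\<^sup>* `` {a} = (rel E U)\<^sup>* `` {b}"
proof -
  assume ab: "(a, b) \<in> (rel E U)\<^sup>*"
  then have ba: "(b, a) \<in> (rel E U)\<^sup>*" by (rule rel_rtrancl_sym)
  show ?thesis
  proof
    show "(rel E U)\<^sup>* `` {a} \<subseteq> (rel E U)\<^sup>* `` {b}" using ba by (auto intro: rtrancl_trans)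
    show "(rel E U)\<^sup>* `` {b} \<subseteq> (rel E U)\<^sup>* `` {a}" using ab by (auto intro: rtrancl_trans)
  qed
qed

lemma rel_rtrancl_in: "(a, b) \<in> (rel E U)\<^sup>* \<Longrightarrow> a \<in> U \<Longrightarrow> b \<in> U"
  by (induction rule: rtrancl_induct) (auto simp: rel_def)

lemma sub_path:
  assumes st: "\<forall>i. Suc i < length p \<longrightarrow> (p ! i, p ! Suc i) \<in> rel E U"
    and "l < length p" and "j \<le> l" and inU: "\<forall>m. j \<le> m \<and> m \<le> l \<longrightarrow> p ! m \<in> U'"
  shows "(p ! j, p ! l) \<in> (rel E U')\<^sup>*"
  using assms(2-4)
proof (induction l)
  case 0 then show ?case by simp
next
  case (Suc l)
  show ?case
  proof (cases "j = Suc l")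
    case True then show ?thesis by simp
  next
    case False
    then have "j \<le> l" using Suc.prems by simp
    then have "(p ! j, p ! l) \<in> (rel E U')\<^sup>*" using Suc by simp
    moreover have "{p ! l, p ! Suc l} \<in> E" using st Suc.prems(1) unfolding rel_def by blast
    then have "(p ! l, p ! Suc l) \<in> rel E U'" using Suc.prems \<open>j \<le> l\<close> unfolding rel_def by auto
    ultimately show ?thesis by simp
  qed
qed

lemma separator:
  fixes S :: "'a set" and W :: "'b \<Rightarrow> 'a set"
  assumes sg: "sgraph V E" and td: "tree_decomposition V E VT ET W"
    and bag: "\<forall>x\<in>VT. card (W x) \<le> k" and SV: "S \<subseteq> V"
  shows "\<exists>X P Q. X \<subseteq> V \<and> card X \<le> k \<and> P \<union> Q \<union> X = V \<and> P \<inter> Q = {} \<and> P \<inter> X = {} \<and> Q \<inter> X = {}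
     \<and> (\<forall>v w. {v, w} \<in> E \<longrightarrow> v \<in> P \<longrightarrow> w \<notin> Q)
     \<and> real (card (S \<inter> P)) \<le> 2 * real (card S) / 3 \<and> real (card (S \<inter> Q)) \<le> 2 * real (card S) / 3"
proof -
  define s where "s = real (card S)"
  define Rx where "Rx x = rel ET (VT - {x})" for x
  define Nv where "Nv v = {t\<in>VT. v \<in> W t}" for v
  define K where "K x v = (Rx x)\<^sup>* `` Nv v" for x v
  have T: "is_tree VT ET" and WV: "\<forall>x\<in>VT. W x \<subseteq> V" and cov: "\<forall>v\<in>V. \<exists>x\<in>VT. v \<in> W x"
    and edg: "\<forall>e\<in>E. \<exists>x\<in>VT. e \<subseteq> W x" and con: "\<forall>v\<in>V. connected_in ET {x\<in>VT. v \<in> W x}"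
    using td unfolding tree_decomposition_def by auto
  have finV: "finite V" using sg unfolding sgraph_def by simp
  have finS: "finite S" using SV finV finite_subset by blast
  have finVT: "finite VT" using T unfolding is_tree_def sgraph_def by simp
  have K_eq: "K x v = (Rx x)\<^sup>* `` {t}" if v: "v \<in> V" "v \<notin> W x" and t: "t \<in> Nv v" for x v t
  proof -
    have sub: "Nv v \<subseteq> VT - {x}" using v unfolding Nv_def by auto
    have c: "\<forall>a\<in>Nv v. \<forall>b\<in>Nv v. (a, b) \<in> (rel ET (Nv v))\<^sup>*"
      using con v(1) unfolding connected_in_rel Nv_def by simp
    have "(t, t') \<in> (Rx x)\<^sup>*" if "t' \<in> Nv v" for t'
    proof -
      have "(t, t') \<in> (rel ET (Nv v))\<^sup>*" using c t that by blast
      then show ?thesis unfolding Rx_def by (rule rel_mono[rotated 2]) (use sub in auto)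
    qed
    then have tt: "\<And>t'. t' \<in> Nv v \<Longrightarrow> (t, t') \<in> (Rx x)\<^sup>*" by blast
    have "(Rx x)\<^sup>* `` Nv v \<subseteq> (Rx x)\<^sup>* `` {t}"
    proof
      fix z assume "z \<in> (Rx x)\<^sup>* `` Nv v"
      then obtain t' where t': "t' \<in> Nv v" "(t', z) \<in> (Rx x)\<^sup>*" by (rule ImageE)
      have "(t, z) \<in> (Rx x)\<^sup>*" using tt[OF t'(1)] t'(2) by (rule rtrancl_trans)
      then show "z \<in> (Rx x)\<^sup>* `` {t}" by simp
    qed
    moreover have "(Rx x)\<^sup>* `` {t} \<subseteq> (Rx x)\<^sup>* `` Nv v" using t by auto
    ultimately show ?thesis unfolding K_def by (rule subset_antisym)
  qed
  have Nv_ne: "\<exists>t. t \<in> Nv v" if "v \<in> V" for v using cov that unfolding Nv_def by auto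
  define heavy where "heavy x c \<longleftrightarrow> c \<in> VT - {x} \<and>
      real (card {v\<in>S. v \<notin> W x \<and> K x v = (Rx x)\<^sup>* `` {c}}) > s / 2" for x c
  have bal: "\<exists>x\<in>VT. \<forall>c. \<not> heavy x c"
  proof (rule ccontr)
    assume "\<not> (\<exists>x\<in>VT. \<forall>c. \<not> heavy x c)"
    then have allh: "\<forall>x\<in>VT. \<exists>c. heavy x c" by blast
    obtain x0 where "x0 \<in> VT" using T unfolding is_tree_def by blast
    then obtain c0 where "heavy x0 c0" using allh by blast
    then have "x0 \<in> VT \<and> heavy x0 c0" using \<open>x0 \<in> VT\<close> by simp
    then obtain xc where xc: "fst xc \<in> VT \<and> heavy (fst xc) (snd xc)"
      and minxc: "\<forall>yd. fst yd \<in> VT \<and> heavy (fst yd) (snd yd) \<longrightarrow>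
         card ((Rx (fst xc))\<^sup>* `` {snd xc}) \<le> card ((Rx (fst yd))\<^sup>* `` {snd yd})"
      using ex_has_least_nat[of "\<lambda>p. fst p \<in> VT \<and> heavy (fst p) (snd p)" "(x0, c0)"
          "\<lambda>p. card ((Rx (fst p))\<^sup>* `` {snd p})"] by auto
    define x where "x = fst xc"
    define c where "c = snd xc"
    have xV: "x \<in> VT" and hx: "heavy x c" using xc unfolding x_def c_def by auto
    have minc: "card ((Rx x)\<^sup>* `` {c}) \<le> card ((Rx y)\<^sup>* `` {d})" if "y \<in> VT" "heavy y d" for y d
      using minxc[rule_format, of "(y, d)"] that unfolding x_def c_def by simp
    define C where "C = (Rx x)\<^sup>* `` {c}"
    have cV: "c \<in> VT" "c \<noteq> x" using hx unfolding heavy_def by auto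
    have "(x, c) \<in> (rel ET VT)\<^sup>*" using T xV cV unfolding is_tree_def connected_in_rel by blast
    from rtrancl_distinct_path[OF this] obtain p where p: "p \<noteq> []" "hd p = x" "last p = c" "distinct p"
      "\<forall>i. Suc i < length p \<longrightarrow> (p ! i, p ! Suc i) \<in> rel ET VT" "set p \<subseteq> insert x (Range (rel ET VT))"
      by (elim exE conjE) (rule that)
    have pV: "set p \<subseteq> VT" using p(6) xV unfolding rel_def by auto
    have lp: "length p \<ge> 2"
    proof (rule ccontr)
      assume "\<not> length p \<ge> 2"
      moreover have "length p \<noteq> 0" using p(1) by simp
      ultimately have "length p = 1" by linarith
      then have "hd p = last p" using p(1) by (simp add: hd_conv_nth last_conv_nth)
      then show False using p cV by simp
    qed
    define y where "y = p ! 1"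
    have p0: "p ! 0 = x" using p(1,2) by (simp add: hd_conv_nth)
    have pl: "p ! (length p - 1) = c" using p(1,3) by (simp add: last_conv_nth)
    have exy: "{x, y} \<in> ET" using p(5) lp p0 unfolding y_def rel_def by force
    have yV: "y \<in> VT" using pV lp nth_mem[of 1 p] unfolding y_def by auto
    have xy: "x \<noteq> y" using dnth[OF p(4), of 0 1] lp p0 p(1) unfolding y_def by simp
    have "(p ! 1, p ! (length p - 1)) \<in> (rel ET (VT - {x}))\<^sup>*"
    proof (rule sub_path[OF p(5)])
      show "length p - 1 < length p" using lp by simp
      show "1 \<le> length p - 1" using lp by simp
      show "\<forall>m. 1 \<le> m \<and> m \<le> length p - 1 \<longrightarrow> p ! m \<in> VT - {x}"
      proof (intro allI impI)
        fix m assume m: "1 \<le> m \<and> m \<le> length p - 1"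
        then have mlt: "m < length p" using lp by linarith
        then have "p ! m \<in> VT" using pV nth_mem[of m p] by auto
        moreover have "p ! m \<noteq> x" using dnth[OF p(4), of m 0] m mlt lp p0 p(1) by simp
        ultimately show "p ! m \<in> VT - {x}" by simp
      qed
    qed
    then have "(y, c) \<in> (Rx x)\<^sup>*" unfolding y_def Rx_def using pl by simp
    then have Cy: "C = (Rx x)\<^sup>* `` {y}" unfolding C_def Rx_def by (metis rel_class_eq rel_rtrancl_sym)
    have yC: "y \<in> C" unfolding Cy by simp
    obtain d where hy: "heavy y d" using allh yV by blast
    define D where "D = (Rx y)\<^sup>* `` {d}"
    have dV: "d \<in> VT" "d \<noteq> y" using hy unfolding heavy_def by auto
    show False
    proof (cases "x \<in> D")
      case True
      define A1 where "A1 = {v\<in>S. v \<notin> W x \<and> K x v = C}"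
      define A2 where "A2 = {v\<in>S. v \<notin> W y \<and> K y v = D}"
      have "real (card A1) > s / 2" using hx unfolding heavy_def A1_def C_def by simp
      moreover have "real (card A2) > s / 2" using hy unfolding heavy_def A2_def D_def by simp
      ultimately have gt: "card A1 + card A2 > card S" unfolding s_def by linarith
      have "A1 \<inter> A2 \<noteq> {}"
      proof
        assume "A1 \<inter> A2 = {}"
        moreover have "A1 \<union> A2 \<subseteq> S" unfolding A1_def A2_def by auto
        moreover have "finite A1" "finite A2" using finS unfolding A1_def A2_def by auto
        ultimately have "card (A1 \<union> A2) = card A1 + card A2" "card (A1 \<union> A2) \<le> card S"
          using finS card_Un_disjoint card_mono[OF finS, of "A1 \<union> A2"] by auto
        then have "card A1 + card A2 \<le> card S" by simp
        then show False using gt by simp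
      qed
      then obtain v where "v \<in> A1 \<inter> A2" by blast
      then have v: "v \<in> S" "v \<notin> W x" "K x v = C" "v \<notin> W y" "K y v = D"
        unfolding A1_def A2_def by auto
      have vV: "v \<in> V" using v SV by auto
      obtain t where t: "t \<in> Nv v" using Nv_ne vV by blast
      have "C = (Rx x)\<^sup>* `` {t}" using K_eq[OF vV v(2) t] v(3) by simp
      then have ty: "(t, y) \<in> (Rx x)\<^sup>*" using yC by simp
      have "D = (Rx y)\<^sup>* `` {t}" using K_eq[OF vV v(4) t] v(5) by simp
      then have tx: "(t, x) \<in> (Rx y)\<^sup>*" using True by simp
      have s1: "rel ET (VT - {x}) \<subseteq> rel (ET - {{x, y}}) VT"
      proof
        fix uw assume "uw \<in> rel ET (VT - {x})"
        then obtain u w where uw: "uw = (u, w)" "u \<in> VT - {x}" "w \<in> VT - {x}" "{u, w} \<in> ET"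
          unfolding rel_def by blast
        have "x \<notin> {u, w}" using uw by auto
        then have "{u, w} \<noteq> {x, y}" by (metis insertI1)
        then show "uw \<in> rel (ET - {{x, y}}) VT" using uw unfolding rel_def by simp
      qed
      have s2: "rel ET (VT - {y}) \<subseteq> rel (ET - {{x, y}}) VT"
      proof
        fix uw assume "uw \<in> rel ET (VT - {y})"
        then obtain u w where uw: "uw = (u, w)" "u \<in> VT - {y}" "w \<in> VT - {y}" "{u, w} \<in> ET"
          unfolding rel_def by blast
        have "y \<notin> {u, w}" using uw by auto
        then have "{u, w} \<noteq> {x, y}" by (metis insertI1 insert_commute)
        then show "uw \<in> rel (ET - {{x, y}}) VT" using uw unfolding rel_def by simp
      qed
      have "(t, y) \<in> (rel (ET - {{x, y}}) VT)\<^sup>*" using ty rtrancl_mono[OF s1] unfolding Rx_def by (rule subsetD[rotated])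
      moreover have "(t, x) \<in> (rel (ET - {{x, y}}) VT)\<^sup>*" using tx rtrancl_mono[OF s2] unfolding Rx_def by (rule subsetD[rotated])
      then have "(x, t) \<in> (rel (ET - {{x, y}}) VT)\<^sup>*" by (rule rel_rtrancl_sym)
      ultimately have "(x, y) \<in> (rel (ET - {{x, y}}) VT)\<^sup>*" by simp
      then show False using tree_edge_cut[OF T exy xy] by simp
    next
      case False
      have DC: "D \<subseteq> C"
      proof
        fix w assume wD: "w \<in> D"
        then have dw: "(d, w) \<in> (Rx y)\<^sup>*" unfolding D_def by simp
        have wV: "w \<in> VT - {y}" using rel_rtrancl_in[OF dw[unfolded Rx_def]] dV by simp
        have wx: "w \<noteq> x" using wD False by auto
        have "(w, x) \<in> (rel ET VT)\<^sup>*" using T wV xV unfolding is_tree_def connected_in_rel by blast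
        from rtrancl_distinct_path[OF this] obtain q where q: "q \<noteq> []" "hd q = w" "last q = x" "distinct q"
          "\<forall>i. Suc i < length q \<longrightarrow> (q ! i, q ! Suc i) \<in> rel ET VT" "set q \<subseteq> insert w (Range (rel ET VT))"
          by (elim exE conjE) (rule that)
        have qV: "set q \<subseteq> VT" using q(6) wV unfolding rel_def by auto
        have q0: "q ! 0 = w" using q(1,2) by (simp add: hd_conv_nth)
        have ql: "q ! (length q - 1) = x" using q(1,3) by (simp add: last_conv_nth)
        show "w \<in> C"
        proof (cases "y \<in> set q")
          case False
          have "(q ! 0, q ! (length q - 1)) \<in> (rel ET (VT - {y}))\<^sup>*"
          proof (rule sub_path[OF q(5)])
            show "length q - 1 < length q" "0 \<le> length q - 1" using q(1) by auto
            show "\<forall>m. 0 \<le> m \<and> m \<le> length q - 1 \<longrightarrow> q ! m \<in> VT - {y}"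
            proof (intro allI impI)
              fix m assume m: "0 \<le> m \<and> m \<le> length q - 1"
              then have mlt: "m < length q" using q(1) by (cases q) auto
              then have "q ! m \<in> set q" by (rule nth_mem)
              then show "q ! m \<in> VT - {y}" using qV False by auto
            qed
          qed
          then have "(w, x) \<in> (Rx y)\<^sup>*" using q0 ql unfolding Rx_def by simp
          then have "(d, x) \<in> (Rx y)\<^sup>*" using dw by (rule rtrancl_trans[rotated])
          then have "x \<in> D" unfolding D_def by simp
          then show ?thesis using \<open>x \<notin> D\<close> by simp
        next
          case True
          then obtain i where i: "i < length q" "q ! i = y" by (metis in_set_conv_nth)
          have "i \<noteq> length q - 1" using i ql xy by auto
          then have il: "i < length q - 1" using i by linarith
          have "(q ! 0, q ! i) \<in> (rel ET (VT - {x}))\<^sup>*"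
          proof (rule sub_path[OF q(5)])
            show "i < length q" "0 \<le> i" using i by auto
            show "\<forall>m. 0 \<le> m \<and> m \<le> i \<longrightarrow> q ! m \<in> VT - {x}"
            proof (intro allI impI)
              fix m assume m: "0 \<le> m \<and> m \<le> i"
              then have "q ! m \<in> VT" using qV i by (meson le_less_trans nth_mem subsetD)
              moreover have "q ! m \<noteq> x" using dnth[OF q(4), of m "length q - 1"] m il ql q(1) by simp
              ultimately show "q ! m \<in> VT - {x}" by simp
            qed
          qed
          then have "(w, y) \<in> (Rx x)\<^sup>*" using q0 i unfolding Rx_def by simp
          then have "(y, w) \<in> (Rx x)\<^sup>*" unfolding Rx_def by (rule rel_rtrancl_sym)
          then show ?thesis unfolding Cy by simp
        qed
      qed
      have yD: "y \<notin> D" using rel_rtrancl_in[of d _ ET "VT - {y}"] dV unfolding D_def Rx_def by blast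
      have "D \<subset> C" using DC yD yC by blast
      moreover have "C \<subseteq> VT" unfolding C_def Rx_def
        using rel_rtrancl_in[of c _ ET "VT - {x}"] cV by auto
      then have "finite C" using finVT finite_subset by blast
      ultimately have "card D < card C" by (rule psubset_card_mono[rotated])
      moreover have "card C \<le> card D" using minc[OF yV hy] unfolding C_def D_def .
      ultimately show False by simp
    qed
  qed
  then obtain x where xV: "x \<in> VT" and nh: "\<forall>c. \<not> heavy x c" by blast
  define S' where "S' = S - W x"
  have fibers: "real (card {v\<in>S'. K x v = C'}) \<le> s / 2" for C'
  proof (cases "{v\<in>S'. K x v = C'} = {}")
    case True
    have "real (card {v\<in>S'. K x v = C'}) = 0" by (simp only: True card.empty of_nat_0)
    then show ?thesis unfolding s_def by simp
  next
    case False
    then obtain v0 where v0: "v0 \<in> S'" "K x v0 = C'" by blast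
    have v0V: "v0 \<in> V" "v0 \<notin> W x" using v0 SV unfolding S'_def by auto
    obtain t where t: "t \<in> Nv v0" using Nv_ne v0V by blast
    have tV: "t \<in> VT - {x}" using t v0V unfolding Nv_def by auto
    have "C' = (Rx x)\<^sup>* `` {t}" using K_eq[OF v0V t] v0 by simp
    moreover have "{v\<in>S'. K x v = C'} = {v\<in>S. v \<notin> W x \<and> K x v = C'}" unfolding S'_def by auto
    ultimately show ?thesis using nh[rule_format, of t] tV unfolding heavy_def by auto
  qed
  have finS': "finite S'" using finS unfolding S'_def by simp
  have "real (card S') \<le> s" unfolding s_def S'_def using finS by (simp add: card_mono)
  from grouping[OF finS' fibers this] obtain P where P:
    "real (card {v\<in>S'. P (K x v)}) \<le> 2 * s / 3" "real (card {v\<in>S'. \<not> P (K x v)}) \<le> 2 * s / 3" by blast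
  define PP where "PP = {v\<in>V - W x. P (K x v)}"
  define QQ where "QQ = {v\<in>V - W x. \<not> P (K x v)}"
  have "S \<inter> PP = {v\<in>S'. P (K x v)}" "S \<inter> QQ = {v\<in>S'. \<not> P (K x v)}"
    unfolding PP_def QQ_def S'_def using SV by auto
  then have c1: "real (card (S \<inter> PP)) \<le> 2 * real (card S) / 3" "real (card (S \<inter> QQ)) \<le> 2 * real (card S) / 3"
    using P unfolding s_def by auto
  have noedge: "\<forall>v w. {v, w} \<in> E \<longrightarrow> v \<in> PP \<longrightarrow> w \<notin> QQ"
  proof (intro allI impI)
    fix v w assume e: "{v, w} \<in> E" and vP: "v \<in> PP"
    show "w \<notin> QQ"
    proof
      assume wQ: "w \<in> QQ"
      obtain y where y: "y \<in> VT" "{v, w} \<subseteq> W y" using edg e by blast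
      have vv: "v \<in> V" "v \<notin> W x" "w \<in> V" "w \<notin> W x" using vP wQ unfolding PP_def QQ_def by auto
      have "y \<in> Nv v" "y \<in> Nv w" using y unfolding Nv_def by auto
      then have "K x v = K x w" using K_eq[OF vv(1,2)] K_eq[OF vv(3,4)] by simp
      then show False using vP wQ unfolding PP_def QQ_def by simp
    qed
  qed
  have XV: "W x \<subseteq> V" using WV xV by blast
  have "card (W x) \<le> k" using bag xV by blast
  moreover have "PP \<union> QQ \<union> W x = V" unfolding PP_def QQ_def using XV by auto
  moreover have "PP \<inter> QQ = {}" "PP \<inter> W x = {}" "QQ \<inter> W x = {}" unfolding PP_def QQ_def by auto
  ultimately show ?thesis using XV noedge c1 by blast
qed


definition sub :: "'a set set \<Rightarrow> 'a set \<Rightarrow> 'a set set" where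
  "sub E A = {e\<in>E. e \<subseteq> A}"

lemma sub_sgraph: "sgraph V E \<Longrightarrow> A \<subseteq> V \<Longrightarrow> sgraph A (sub E A)"
proof -
  assume sg: "sgraph V E" and AV: "A \<subseteq> V"
  have "finite A" using sg AV unfolding sgraph_def by (blast intro: finite_subset)
  moreover have "\<exists>u v. u \<in> A \<and> v \<in> A \<and> u \<noteq> v \<and> e = {u, v}" if e: "e \<in> sub E A" for e
  proof -
    have "e \<in> E" "e \<subseteq> A" using e unfolding sub_def by auto
    then obtain u v where "u \<noteq> v" "e = {u, v}" using sg unfolding sgraph_def by blast
    then show ?thesis using \<open>e \<subseteq> A\<close> by blast
  qed
  ultimately show ?thesis unfolding sgraph_def by blast
qed

lemma deg_fin: "sgraph V E \<Longrightarrow> finite {u. {v, u} \<in> E}"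
proof -
  assume sg: "sgraph V E"
  have "{u. {v, u} \<in> E} \<subseteq> V" using sgraph_edge[OF sg] by blast
  then show ?thesis using sg unfolding sgraph_def by (blast intro: finite_subset)
qed

lemma sub_deg: "sgraph V E \<Longrightarrow> max_degree_le V E D \<Longrightarrow> A \<subseteq> V \<Longrightarrow> max_degree_le A (sub E A) D"
proof -
  assume sg: "sgraph V E" and md: "max_degree_le V E D" and AV: "A \<subseteq> V"
  show ?thesis unfolding max_degree_le_def
  proof
    fix v assume "v \<in> A"
    have "{u. {v, u} \<in> sub E A} \<subseteq> {u. {v, u} \<in> E}" unfolding sub_def by auto
    then have "degree (sub E A) v \<le> degree E v" unfolding degree_def using deg_fin[OF sg] by (rule card_mono[rotated])
    then show "real (degree (sub E A) v) \<le> D" using md \<open>v \<in> A\<close> AV unfolding max_degree_le_def by force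
  qed
qed

lemma sub_tw: "sgraph V E \<Longrightarrow> treewidth_le V E w \<Longrightarrow> A \<subseteq> V \<Longrightarrow> treewidth_le A (sub E A) w"
proof -
  assume sg: "sgraph V E" and tw: "treewidth_le V E w" and AV: "A \<subseteq> V"
  obtain VT :: "nat set" and ET W where td: "tree_decomposition V E VT ET W" and bw: "\<forall>x\<in>VT. card (W x) \<le> w + 1"
    using tw unfolding treewidth_le_def by blast
  have T: "is_tree VT ET" and WV: "\<forall>x\<in>VT. W x \<subseteq> V" and cov: "\<forall>v\<in>V. \<exists>x\<in>VT. v \<in> W x"
    and edg: "\<forall>e\<in>E. \<exists>x\<in>VT. e \<subseteq> W x" and con: "\<forall>v\<in>V. connected_in ET {x\<in>VT. v \<in> W x}"
    using td unfolding tree_decomposition_def by auto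
  define W' where "W' x = W x \<inter> A" for x
  have finV: "finite V" using sg unfolding sgraph_def by simp
  have c2: "\<forall>v\<in>A. \<exists>x\<in>VT. v \<in> W' x"
  proof
    fix v assume "v \<in> A"
    then obtain x where "x \<in> VT" "v \<in> W x" using cov AV by blast
    then show "\<exists>x\<in>VT. v \<in> W' x" using \<open>v \<in> A\<close> unfolding W'_def by blast
  qed
  have c3: "\<forall>e\<in>sub E A. \<exists>x\<in>VT. e \<subseteq> W' x"
  proof
    fix e assume "e \<in> sub E A"
    then have e: "e \<in> E" "e \<subseteq> A" unfolding sub_def by auto
    then obtain x where "x \<in> VT" "e \<subseteq> W x" using edg by blast
    then show "\<exists>x\<in>VT. e \<subseteq> W' x" using e(2) unfolding W'_def by blast
  qed
  have c4: "\<forall>v\<in>A. connected_in ET {x \<in> VT. v \<in> W' x}"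
  proof
    fix v assume "v \<in> A"
    then have "{x \<in> VT. v \<in> W' x} = {x \<in> VT. v \<in> W x}" unfolding W'_def by auto
    moreover have "connected_in ET {x \<in> VT. v \<in> W x}" using con AV \<open>v \<in> A\<close> by blast
    ultimately show "connected_in ET {x \<in> VT. v \<in> W' x}" by simp
  qed
  have c1: "\<forall>x\<in>VT. W' x \<subseteq> A" unfolding W'_def by auto
  have "tree_decomposition A (sub E A) VT ET W'"
    unfolding tree_decomposition_def using T c1 c2 c3 c4 by blast
  moreover have "\<forall>x\<in>VT. card (W' x) \<le> w + 1"
  proof
    fix x assume xV: "x \<in> VT"
    then have "W x \<subseteq> V" using WV by blast
    then have "finite (W x)" using finV finite_subset by blast
    then have "card (W' x) \<le> card (W x)" unfolding W'_def by (simp add: card_mono)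
    then show "card (W' x) \<le> w + 1" using bw xV by force
  qed
  ultimately show ?thesis unfolding treewidth_le_def by blast
qed

lemma tp_merge:
  fixes BA BB :: "nat \<Rightarrow> 'a set"
  assumes TA: "tree_partition (P \<union> X) (sub E (P \<union> X)) VTA ETA BA"
    and TB: "tree_partition (Q \<union> X) (sub E (Q \<union> X)) VTB ETB BB"
    and int: "VTA \<inter> VTB = {z}" and XA: "X \<subseteq> BA z" and XB: "X \<subseteq> BB z"
    and V: "V = P \<union> Q \<union> X" and PQ: "P \<inter> Q = {}" "P \<inter> X = {}" "Q \<inter> X = {}"
    and sg: "sgraph V E" and ne: "\<forall>v w. {v, w} \<in> E \<longrightarrow> v \<in> P \<longrightarrow> w \<notin> Q"
    and Bf: "Bf = (\<lambda>n. if n = z then BA z \<union> BB z else if n \<in> VTA then BA n else BB n)"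
  shows "tree_partition V E (VTA \<union> VTB) (ETA \<union> ETB) Bf"
    and "\<And>n. n \<in> VTA - {z} \<Longrightarrow> Bf n = BA n \<and> degree (ETA \<union> ETB) n = degree ETA n"
    and "\<And>n. n \<in> VTB - {z} \<Longrightarrow> Bf n = BB n \<and> degree (ETA \<union> ETB) n = degree ETB n"
    and "degree (ETA \<union> ETB) z \<le> degree ETA z + degree ETB z"
    and "card (Bf z) + card X \<le> card (BA z) + card (BB z)"
proof -
  have tA: "is_tree VTA ETA" and tB: "is_tree VTB ETB" using TA TB unfolding tree_partition_def by auto
  have sA: "sgraph VTA ETA" and sB: "sgraph VTB ETB" using tA tB unfolding is_tree_def by auto
  have tpA: "T_partition (P \<union> X) (sub E (P \<union> X)) VTA ETA BA" using TA unfolding tree_partition_def by simp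
  have disjA: "\<forall>x\<in>VTA. \<forall>y\<in>VTA. x \<noteq> y \<longrightarrow> BA x \<inter> BA y = {}"
    using tpA unfolding T_partition_def by (rule conjunct1)
  have unA: "(\<Union>x\<in>VTA. BA x) = P \<union> X" using tpA unfolding T_partition_def by (rule conjunct1[OF conjunct2])
  have edA: "\<forall>v w x y. {v, w} \<in> sub E (P \<union> X) \<and> x \<in> VTA \<and> y \<in> VTA \<and> v \<in> BA x \<and> w \<in> BA y \<longrightarrow> x = y \<or> {x, y} \<in> ETA"
    using tpA unfolding T_partition_def by (rule conjunct2[OF conjunct2])
  have tpB: "T_partition (Q \<union> X) (sub E (Q \<union> X)) VTB ETB BB" using TB unfolding tree_partition_def by simp
  have disjB: "\<forall>x\<in>VTB. \<forall>y\<in>VTB. x \<noteq> y \<longrightarrow> BB x \<inter> BB y = {}"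
    using tpB unfolding T_partition_def by (rule conjunct1)
  have unB: "(\<Union>x\<in>VTB. BB x) = Q \<union> X" using tpB unfolding T_partition_def by (rule conjunct1[OF conjunct2])
  have edB: "\<forall>v w x y. {v, w} \<in> sub E (Q \<union> X) \<and> x \<in> VTB \<and> y \<in> VTB \<and> v \<in> BB x \<and> w \<in> BB y \<longrightarrow> x = y \<or> {x, y} \<in> ETB"
    using tpB unfolding T_partition_def by (rule conjunct2[OF conjunct2])
  have zA: "z \<in> VTA" and zB: "z \<in> VTB" using int by auto
  have BAz: "BA z \<subseteq> P \<union> X" using unA zA by blast
  have BBz: "BB z \<subseteq> Q \<union> X" using unB zB by blast
  have BAn: "BA n \<subseteq> P" if "n \<in> VTA - {z}" for n
  proof -
    have "BA n \<subseteq> P \<union> X" using unA that by blast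
    moreover have "BA n \<inter> BA z = {}" using disjA that zA by blast
    ultimately show ?thesis using XA by blast
  qed
  have BBn: "BB n \<subseteq> Q" if "n \<in> VTB - {z}" for n
  proof -
    have "BB n \<subseteq> Q \<union> X" using unB that by blast
    moreover have "BB n \<inter> BB z = {}" using disjB that zB by blast
    ultimately show ?thesis using XB by blast
  qed
  have BfA: "Bf n = BA n" if "n \<in> VTA - {z}" for n using that Bf by simp
  have BfB: "Bf n = BB n" if "n \<in> VTB - {z}" for n using that Bf int by auto
  have locA: "n \<in> VTA \<and> v \<in> BA n" if "v \<in> P \<union> X" "n \<in> VTA \<union> VTB" "v \<in> Bf n" for v n
  proof (cases "n = z")
    case True
    then have "v \<in> BA z \<or> v \<in> BB z" using that(3) Bf by simp
    then have "v \<in> BA z" using BBz that(1) PQ XA by blast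
    then show ?thesis using True zA by simp
  next
    case False
    show ?thesis
    proof (cases "n \<in> VTA")
      case True then show ?thesis using False that(3) Bf by simp
    next
      case nA: False
      then have "n \<in> VTB - {z}" using that(2) False by simp
      then have "v \<in> Q" using BBn BfB that(3) by blast
      then show ?thesis using that(1) PQ by blast
    qed
  qed
  have locB: "n \<in> VTB \<and> v \<in> BB n" if "v \<in> Q \<union> X" "n \<in> VTA \<union> VTB" "v \<in> Bf n" for v n
  proof (cases "n = z")
    case True
    then have "v \<in> BA z \<or> v \<in> BB z" using that(3) Bf by simp
    then have "v \<in> BB z" using BAz that(1) PQ XB by blast
    then show ?thesis using True zB by simp
  next
    case False
    show ?thesis
    proof (cases "n \<in> VTA")
      case True
      then have "v \<in> P" using BAn BfA that(3) False by blast
      then show ?thesis using that(1) PQ by blast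
    next
      case nA: False
      then show ?thesis using that(2,3) False Bf by simp
    qed
  qed
  have T: "is_tree (VTA \<union> VTB) (ETA \<union> ETB)" by (rule tree_merge[OF tA tB int])
  have disj: "Bf x \<inter> Bf y = {}" if "x \<in> VTA \<union> VTB" "y \<in> VTA \<union> VTB" "x \<noteq> y" for x y
  proof -
    have side: "(n \<in> VTA - {z}) \<or> (n \<in> VTB - {z}) \<or> n = z" if "n \<in> VTA \<union> VTB" for n using that by blast
    have zc: "Bf z \<inter> Bf n = {}" if "n \<in> VTA \<union> VTB" "n \<noteq> z" for n
    proof (cases "n \<in> VTA")
      case True
      then have n: "n \<in> VTA - {z}" using that by simp
      have "BA n \<inter> BA z = {}" using disjA n zA by blast
      moreover have "BA n \<inter> BB z = {}" using BAn[OF n] BBz PQ by blast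
      ultimately show ?thesis using BfA[OF n] Bf by auto
    next
      case False
      then have n: "n \<in> VTB - {z}" using that by simp
      have "BB n \<inter> BB z = {}" using disjB n zB by blast
      moreover have "BB n \<inter> BA z = {}" using BBn[OF n] BAz PQ by blast
      ultimately show ?thesis using BfB[OF n] Bf by auto
    qed
    show ?thesis
    proof (cases "x = z")
      case True then show ?thesis using zc that by blast
    next
      case xz: False
      show ?thesis
      proof (cases "y = z")
        case True then show ?thesis using zc that xz by blast
      next
        case yz: False
        show ?thesis
        proof (cases "x \<in> VTA")
          case xA: True
          show ?thesis
          proof (cases "y \<in> VTA")
            case True then show ?thesis using BfA xA xz yz disjA that by auto
          next
            case False
            then have "y \<in> VTB - {z}" using that yz by simp
            then show ?thesis using BfA[of x] BfB[of y] BAn[of x] BBn[of y] xA xz PQ by auto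
          qed
        next
          case xA: False
          then have x: "x \<in> VTB - {z}" using that xz by simp
          show ?thesis
          proof (cases "y \<in> VTA")
            case True
            then show ?thesis using BfB[OF x] BfA[of y] BBn[OF x] BAn[of y] yz PQ by auto
          next
            case False
            then have "y \<in> VTB - {z}" using that yz by simp
            then show ?thesis using BfB x disjB that by auto
          qed
        qed
      qed
    qed
  qed
  have un: "(\<Union>x\<in>VTA \<union> VTB. Bf x) = V"
  proof
    show "(\<Union>x\<in>VTA \<union> VTB. Bf x) \<subseteq> V"
    proof
      fix v assume "v \<in> (\<Union>x\<in>VTA \<union> VTB. Bf x)"
      then obtain n where n: "n \<in> VTA \<union> VTB" "v \<in> Bf n" by blast
      show "v \<in> V"
      proof (cases "n = z")
        case True then show ?thesis using n BAz BBz V Bf by auto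
      next
        case False
        then show ?thesis using n BfA BfB unA unB V by (cases "n \<in> VTA") auto
      qed
    qed
    show "V \<subseteq> (\<Union>x\<in>VTA \<union> VTB. Bf x)"
    proof
      fix v assume "v \<in> V"
      then have "v \<in> P \<union> X \<or> v \<in> Q \<union> X" using V by auto
      then show "v \<in> (\<Union>x\<in>VTA \<union> VTB. Bf x)"
      proof
        assume "v \<in> P \<union> X"
        then obtain n where n: "n \<in> VTA" "v \<in> BA n" using unA by blast
        then have "v \<in> Bf n" using Bf by (cases "n = z") auto
        then show ?thesis using n by blast
      next
        assume "v \<in> Q \<union> X"
        then obtain n where n: "n \<in> VTB" "v \<in> BB n" using unB by blast
        then have "v \<in> Bf n" using Bf BfB by (cases "n = z") auto
        then show ?thesis using n by blast
      qed
    qed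
  qed
  have ed: "x = y \<or> {x, y} \<in> ETA \<union> ETB"
    if e: "{v, w} \<in> E" and x: "x \<in> VTA \<union> VTB" and y: "y \<in> VTA \<union> VTB" and vx: "v \<in> Bf x" and wy: "w \<in> Bf y" for v w x y
  proof -
    have vw: "v \<in> V" "w \<in> V" using sgraph_edge[OF sg e] by auto
    have ne2: "\<not> (v \<in> P \<and> w \<in> Q)" "\<not> (v \<in> Q \<and> w \<in> P)" using ne e by (auto simp: insert_commute)
    have "(v \<in> P \<union> X \<and> w \<in> P \<union> X) \<or> (v \<in> Q \<union> X \<and> w \<in> Q \<union> X)" using vw V ne2 by blast
    then show ?thesis
    proof
      assume h: "v \<in> P \<union> X \<and> w \<in> P \<union> X"
      then have "{v, w} \<in> sub E (P \<union> X)" using e unfolding sub_def by auto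
      moreover have "x \<in> VTA \<and> v \<in> BA x" "y \<in> VTA \<and> w \<in> BA y" using locA h x y vx wy by auto
      ultimately show ?thesis using edA by blast
    next
      assume h: "v \<in> Q \<union> X \<and> w \<in> Q \<union> X"
      then have "{v, w} \<in> sub E (Q \<union> X)" using e unfolding sub_def by auto
      moreover have "x \<in> VTB \<and> v \<in> BB x" "y \<in> VTB \<and> w \<in> BB y" using locB h x y vx wy by auto
      ultimately show ?thesis using edB by blast
    qed
  qed
  show "tree_partition V E (VTA \<union> VTB) (ETA \<union> ETB) Bf"
    unfolding tree_partition_def T_partition_def using T disj un ed by blast
  show "\<And>n. n \<in> VTA - {z} \<Longrightarrow> Bf n = BA n \<and> degree (ETA \<union> ETB) n = degree ETA n"
  proof -
    fix n assume n: "n \<in> VTA - {z}"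
    have "{u. {n, u} \<in> ETA \<union> ETB} = {u. {n, u} \<in> ETA}"
    proof -
      have "{n, u} \<notin> ETB" for u
      proof
        assume "{n, u} \<in> ETB"
        then have "n \<in> VTB" using sgraph_edge[OF sB] by blast
        then show False using n int by blast
      qed
      then show ?thesis by blast
    qed
    then show "Bf n = BA n \<and> degree (ETA \<union> ETB) n = degree ETA n" using BfA[OF n] unfolding degree_def by simp
  qed
  show "\<And>n. n \<in> VTB - {z} \<Longrightarrow> Bf n = BB n \<and> degree (ETA \<union> ETB) n = degree ETB n"
  proof -
    fix n assume n: "n \<in> VTB - {z}"
    have "{u. {n, u} \<in> ETA \<union> ETB} = {u. {n, u} \<in> ETB}"
    proof -
      have "{n, u} \<notin> ETA" for u
      proof
        assume "{n, u} \<in> ETA"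
        then have "n \<in> VTA" using sgraph_edge[OF sA] by blast
        then show False using n int by blast
      qed
      then show ?thesis by blast
    qed
    then show "Bf n = BB n \<and> degree (ETA \<union> ETB) n = degree ETB n" using BfB[OF n] unfolding degree_def by simp
  qed
  show "degree (ETA \<union> ETB) z \<le> degree ETA z + degree ETB z"
  proof -
    have "{u. {z, u} \<in> ETA \<union> ETB} = {u. {z, u} \<in> ETA} \<union> {u. {z, u} \<in> ETB}" by blast
    then have "degree (ETA \<union> ETB) z = card ({u. {z, u} \<in> ETA} \<union> {u. {z, u} \<in> ETB})" unfolding degree_def by simp
    also have "\<dots> \<le> card {u. {z, u} \<in> ETA} + card {u. {z, u} \<in> ETB}" by (rule card_Un_le)
    finally show ?thesis unfolding degree_def .
  qed
  show "card (Bf z) + card X \<le> card (BA z) + card (BB z)"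
  proof -
    have finV: "finite V" using sg unfolding sgraph_def by simp
    have f1: "finite (BA z)" "finite (BB z)" using BAz BBz V finV by (auto intro: finite_subset)
    have "card (BA z \<union> BB z) + card (BA z \<inter> BB z) = card (BA z) + card (BB z)"
      using f1 by (rule card_Un_Int[symmetric])
    moreover have "card X \<le> card (BA z \<inter> BB z)" using XA XB f1 by (intro card_mono) auto
    ultimately show ?thesis using Bf by simp
  qed
qed

lemma tp_single: "tree_partition V E {z} {} (\<lambda>_. V)"
  unfolding tree_partition_def T_partition_def using tree_single by simp

lemma tp_attach:
  fixes B' :: "nat \<Rightarrow> 'a set"
  assumes TR: "tree_partition R (sub E R) VT' ET' B'" and r: "r \<in> VT'" and z: "z \<notin> VT'"
    and nb: "\<forall>v w. {v, w} \<in> E \<longrightarrow> v \<in> S \<longrightarrow> w \<in> R \<longrightarrow> w \<in> B' r"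
    and V: "V = S \<union> R" and SR: "S \<inter> R = {}" and sg: "sgraph V E"
    and Bf: "Bf = (\<lambda>n. if n = z then S else B' n)"
  shows "tree_partition V E (VT' \<union> {z, r}) (ET' \<union> {{z, r}}) Bf"
    and "\<And>n. n \<in> VT' - {r} \<Longrightarrow> Bf n = B' n \<and> degree (ET' \<union> {{z, r}}) n = degree ET' n"
    and "Bf r = B' r" and "degree (ET' \<union> {{z, r}}) r \<le> degree ET' r + 1"
    and "degree (ET' \<union> {{z, r}}) z = 1" and "Bf z = S"
proof -
  have tR: "is_tree VT' ET'" using TR unfolding tree_partition_def by simp
  have sR: "sgraph VT' ET'" using tR unfolding is_tree_def by simp
  have zr: "z \<noteq> r" using z r by auto
  have tpR: "T_partition R (sub E R) VT' ET' B'" using TR unfolding tree_partition_def by simp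
  have disjR: "\<forall>x\<in>VT'. \<forall>y\<in>VT'. x \<noteq> y \<longrightarrow> B' x \<inter> B' y = {}"
    using tpR unfolding T_partition_def by (rule conjunct1)
  have unR: "(\<Union>x\<in>VT'. B' x) = R" using tpR unfolding T_partition_def by (rule conjunct1[OF conjunct2])
  have edR: "\<forall>v w x y. {v, w} \<in> sub E R \<and> x \<in> VT' \<and> y \<in> VT' \<and> v \<in> B' x \<and> w \<in> B' y \<longrightarrow> x = y \<or> {x, y} \<in> ET'"
    using tpR unfolding T_partition_def by (rule conjunct2[OF conjunct2])
  have BR: "B' n \<subseteq> R" if "n \<in> VT'" for n using unR that by blast
  have T: "is_tree (VT' \<union> {z, r}) (ET' \<union> {{z, r}})"
  proof (rule tree_merge[OF tR tree_edge[OF zr]])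
    show "VT' \<inter> {z, r} = {r}" using r z by blast
  qed
  have Bn: "Bf n = B' n" if "n \<noteq> z" for n using that Bf by simp
  have Bz: "Bf z = S" using Bf by simp
  have VTe: "VT' \<union> {z, r} = insert z VT'" using r by auto
  have disj: "Bf x \<inter> Bf y = {}" if "x \<in> insert z VT'" "y \<in> insert z VT'" "x \<noteq> y" for x y
  proof (cases "x = z")
    case True
    then have "y \<in> VT'" using that by auto
    then show ?thesis using True Bz Bn[of y] BR[of y] SR that z by auto
  next
    case xz: False
    show ?thesis
    proof (cases "y = z")
      case True
      then have "x \<in> VT'" using that by auto
      then show ?thesis using True Bz Bn[of x] BR[of x] SR xz by auto
    next
      case False
      then show ?thesis using xz that Bn disjR by auto
    qed
  qed
  have un: "(\<Union>x\<in>insert z VT'. Bf x) = V"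
  proof -
    have "(\<Union>x\<in>VT'. Bf x) = (\<Union>x\<in>VT'. B' x)"
    proof (rule SUP_cong)
      fix x assume "x \<in> VT'"
      then have "x \<noteq> z" using z by auto
      then show "Bf x = B' x" by (rule Bn)
    qed simp
    then show ?thesis using Bz unR V by simp
  qed
  have inr: "w \<in> B' r" if "{v, w} \<in> E" "v \<in> S" "w \<in> R" for v w using nb that by blast
  have ed: "x = y \<or> {x, y} \<in> ET' \<union> {{z, r}}"
    if e: "{v, w} \<in> E" and x: "x \<in> insert z VT'" and y: "y \<in> insert z VT'" and vx: "v \<in> Bf x" and wy: "w \<in> Bf y" for v w x y
  proof (cases "x = z")
    case xz: True
    show ?thesis
    proof (cases "y = z")
      case True then show ?thesis using xz by simp
    next
      case False
      then have yV: "y \<in> VT'" using y by simp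
      have "v \<in> S" using vx xz Bz by simp
      moreover have "w \<in> B' y" using wy Bn False by simp
      then have "w \<in> R" using BR yV by blast
      ultimately have "w \<in> B' r" using inr e by blast
      then have "y = r" using disjR yV r \<open>w \<in> B' y\<close> by blast
      then show ?thesis using xz by simp
    qed
  next
    case xz: False
    then have xV: "x \<in> VT'" using x by simp
    have vB: "v \<in> B' x" using vx Bn xz by simp
    then have vR: "v \<in> R" using BR xV by blast
    show ?thesis
    proof (cases "y = z")
      case True
      have "w \<in> S" using wy True Bz by simp
      moreover have "{w, v} \<in> E" using e by (simp add: insert_commute)
      ultimately have "v \<in> B' r" using inr vR by blast
      then have "x = r" using disjR xV r vB by blast
      then show ?thesis using True by (simp add: insert_commute)
    next
      case False
      then have yV: "y \<in> VT'" using y by simp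
      have wB: "w \<in> B' y" using wy Bn False by simp
      then have "w \<in> R" using BR yV by blast
      then have "{v, w} \<in> sub E R" using e vR unfolding sub_def by auto
      then show ?thesis using edR xV yV vB wB by blast
    qed
  qed
  have tp: "T_partition V E (insert z VT') (ET' \<union> {{z, r}}) Bf"
    unfolding T_partition_def
  proof (intro conjI)
    show "\<forall>x\<in>insert z VT'. \<forall>y\<in>insert z VT'. x \<noteq> y \<longrightarrow> Bf x \<inter> Bf y = {}" using disj by blast
    show "(\<Union>x\<in>insert z VT'. Bf x) = V" by (rule un)
    show "\<forall>v w x y. {v, w} \<in> E \<and> x \<in> insert z VT' \<and> y \<in> insert z VT' \<and> v \<in> Bf x \<and> w \<in> Bf y
       \<longrightarrow> x = y \<or> {x, y} \<in> ET' \<union> {{z, r}}" using ed by blast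
  qed
  show "tree_partition V E (VT' \<union> {z, r}) (ET' \<union> {{z, r}}) Bf"
    unfolding tree_partition_def VTe using T[unfolded VTe] tp by simp
  show "\<And>n. n \<in> VT' - {r} \<Longrightarrow> Bf n = B' n \<and> degree (ET' \<union> {{z, r}}) n = degree ET' n"
  proof -
    fix n assume n: "n \<in> VT' - {r}"
    have "n \<noteq> z" using n z by auto
    then have "{n, u} \<noteq> {z, r}" for u using n by (auto simp: doubleton_eq_iff)
    then have "{u. {n, u} \<in> ET' \<union> {{z, r}}} = {u. {n, u} \<in> ET'}" by blast
    then show "Bf n = B' n \<and> degree (ET' \<union> {{z, r}}) n = degree ET' n" using Bn \<open>n \<noteq> z\<close> unfolding degree_def by simp
  qed
  show "Bf r = B' r" using Bn zr by simp
  show "degree (ET' \<union> {{z, r}}) r \<le> degree ET' r + 1"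
  proof -
    have "{u. {r, u} \<in> ET' \<union> {{z, r}}} \<subseteq> insert z {u. {r, u} \<in> ET'}" by (auto simp: doubleton_eq_iff)
    moreover have "finite (insert z {u. {r, u} \<in> ET'})" using deg_fin[OF sR] by simp
    ultimately have "card {u. {r, u} \<in> ET' \<union> {{z, r}}} \<le> card (insert z {u. {r, u} \<in> ET'})" by (rule card_mono[rotated])
    also have "\<dots> \<le> card {u. {r, u} \<in> ET'} + 1" using deg_fin[OF sR] by (simp add: card_insert_if)
    finally show ?thesis unfolding degree_def .
  qed
  show "degree (ET' \<union> {{z, r}}) z = 1"
  proof -
    have "{z, u} \<notin> ET'" for u using sgraph_edge[OF sR] z by blast
    then have "{u. {z, u} \<in> ET' \<union> {{z, r}}} = {r}" using zr by (auto simp: doubleton_eq_iff)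
    then show ?thesis unfolding degree_def by simp
  qed
  show "Bf z = S" by (rule Bz)
qed

lemma nbr_bound:
  assumes sg: "sgraph V E" and md: "max_degree_le V E (real d)" and SV: "S \<subseteq> V"
  shows "card {w. \<exists>v\<in>S. {v, w} \<in> E} \<le> card S * d"
proof -
  have finS: "finite S" using sg SV unfolding sgraph_def by (blast intro: finite_subset)
  have "{w. \<exists>v\<in>S. {v, w} \<in> E} = (\<Union>v\<in>S. {u. {v, u} \<in> E})" by blast
  then have "card {w. \<exists>v\<in>S. {v, w} \<in> E} \<le> (\<Sum>v\<in>S. card {u. {v, u} \<in> E})"
    using card_UN_le[OF finS, of "\<lambda>v. {u. {v, u} \<in> E}"] by simp
  also have "\<dots> \<le> of_nat (card S) * d"
  proof (rule sum_bounded_above)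
    fix v assume "v \<in> S"
    then have "real (degree E v) \<le> real d" using md SV unfolding max_degree_le_def by blast
    then show "card {u. {v, u} \<in> E} \<le> d" unfolding degree_def by simp
  qed
  finally show ?thesis by simp
qed

lemma pad_set:
  assumes fin: "finite R" and NR: "N \<subseteq> R" and n: "n \<le> card R"
  shows "\<exists>SR. N \<subseteq> SR \<and> SR \<subseteq> R \<and> card SR = max (card N) n"
proof (cases "card N < n")
  case True
  have finN: "finite N" using fin NR finite_subset by blast
  have "card (R - N) = card R - card N" using card_Diff_subset[OF finN NR] .
  then have "n - card N \<le> card (R - N)" using n by simp
  then obtain T where T: "T \<subseteq> R - N" "card T = n - card N" "finite T" by (rule obtain_subset_with_card_n)
  have "card (N \<union> T) = card N + card T" using T finN by (intro card_Un_disjoint) auto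
  then have "card (N \<union> T) = max (card N) n" using T True by simp
  then show ?thesis using T NR by (intro exI[of _ "N \<union> T"]) auto
next
  case False
  then show ?thesis using NR by (intro exI[of _ N]) auto
qed

context
  fixes k d :: nat and \<alpha> :: real
  assumes k1: "k \<ge> 1" and d1: "d \<ge> 1" and a2: "\<alpha> > 2"
begin

definition ff :: "real \<Rightarrow> real" where "ff s = ((\<alpha> - 1) * s - \<alpha> * k) / (\<alpha> - 2)"
definition gg :: "real \<Rightarrow> real" where "gg s = (s - 2 * k) / ((\<alpha> - 2) * k)"

lemma kpos: "real k > 0" using k1 by simp

lemma ff_eq: "ff s = (\<alpha> - 1) / (\<alpha> - 2) * s - \<alpha> / (\<alpha> - 2) * k"
proof -
  have e1: "(\<alpha> - 1) / (\<alpha> - 2) * s = (\<alpha> - 1) * s / (\<alpha> - 2)" by simp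
  have e2: "\<alpha> / (\<alpha> - 2) * k = \<alpha> * k / (\<alpha> - 2)" by simp
  show ?thesis unfolding ff_def e1 e2 by (rule diff_divide_distrib)
qed

lemma gg_eq: "gg s = 1 / ((\<alpha> - 2) * k) * s - 2 / (\<alpha> - 2)"
proof -
  have "2 * real k / ((\<alpha> - 2) * k) = 2 / (\<alpha> - 2)" using kpos by simp
  then show ?thesis unfolding gg_def diff_divide_distrib by simp
qed

lemma Wd_eq: "ff (3 * \<alpha> * k * d) = 3 * \<alpha> * (\<alpha> - 1) / (\<alpha> - 2) * k * d - \<alpha> / (\<alpha> - 2) * k"
  unfolding ff_def diff_divide_distrib by simp

lemma Dg_eq: "gg (3 * \<alpha> * k * d) + 1 = 3 * \<alpha> / (\<alpha> - 2) * d + (\<alpha> - 4) / (\<alpha> - 2)"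
proof -
  have a: "\<alpha> - 2 \<noteq> 0" using a2 by simp
  have "gg (3 * \<alpha> * k * d) = (3 * \<alpha> * d - 2) / (\<alpha> - 2)"
    unfolding gg_def using kpos a by (simp add: field_simps)
  moreover have "(3 * \<alpha> * d - 2) / (\<alpha> - 2) + 1 = (3 * \<alpha> * d - 2) / (\<alpha> - 2) + (\<alpha> - 2) / (\<alpha> - 2)"
    using a by simp
  moreover have "\<dots> = (3 * \<alpha> * d - 2 + (\<alpha> - 2)) / (\<alpha> - 2)" by (rule add_divide_distrib[symmetric])
  moreover have "3 * \<alpha> / (\<alpha> - 2) * d + (\<alpha> - 4) / (\<alpha> - 2) = (3 * \<alpha> * d + (\<alpha> - 4)) / (\<alpha> - 2)"
    by (simp add: add_divide_distrib)
  moreover have "3 * \<alpha> * d - 2 + (\<alpha> - 2) = 3 * \<alpha> * d + (\<alpha> - 4)" by simp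
  ultimately show ?thesis by simp
qed

lemma ff_mono: "s \<le> t \<Longrightarrow> ff s \<le> ff t"
  unfolding ff_def using a2 by (intro divide_right_mono) (auto intro: mult_left_mono)

lemma gg_mono: "s \<le> t \<Longrightarrow> gg s \<le> gg t"
  unfolding gg_def using a2 kpos by (intro divide_right_mono) auto

lemma ff_ge: "\<alpha> * k \<le> s \<Longrightarrow> s \<le> ff s"
proof -
  assume h: "\<alpha> * k \<le> s"
  have "(\<alpha> - 2) * s \<le> (\<alpha> - 1) * s - \<alpha> * k" using h by (simp add: algebra_simps)
  then show "s \<le> ff s" unfolding ff_def using a2 by (simp add: field_simps)
qed

lemma gg_ge1: "\<alpha> * k \<le> s \<Longrightarrow> 1 \<le> gg s"
proof -
  assume h: "\<alpha> * k \<le> s"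
  have "(\<alpha> - 2) * k \<le> s - 2 * k" using h by (simp add: algebra_simps)
  then show "1 \<le> gg s" unfolding gg_def using a2 kpos by (simp add: field_simps)
qed

lemma ak_le: "\<alpha> * k \<le> 3 * \<alpha> * k * d"
proof -
  have "\<alpha> * k * 1 \<le> \<alpha> * k * (3 * d)" using d1 a2 kpos by (intro mult_left_mono) auto
  then show ?thesis by (simp add: algebra_simps)
qed

lemma ak1_le: "\<alpha> * k + 1 \<le> 3 * \<alpha> * k * d"
proof -
  have "\<alpha> * k * 1 \<le> \<alpha> * k * d" using d1 a2 kpos by (intro mult_left_mono) auto
  moreover have "\<alpha> * 1 \<le> \<alpha> * k" using a2 k1 by (intro mult_left_mono) auto
  then have "1 \<le> \<alpha> * k" using a2 by linarith
  ultimately show ?thesis by (simp add: algebra_simps)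
qed

lemma k_le: "real k \<le> \<alpha> * k * d"
proof -
  have "\<alpha> * 1 \<le> \<alpha> * d" using a2 d1 by (intro mult_left_mono) auto
  then have "1 \<le> \<alpha> * d" using a2 by linarith
  then have "1 * real k \<le> (\<alpha> * d) * k" using kpos by (intro mult_right_mono) auto
  then show ?thesis by (simp add: algebra_simps)
qed

lemma ff_mul: "(\<alpha> - 2) * ff u = (\<alpha> - 1) * u - \<alpha> * k"
  unfolding ff_def using a2 by simp

lemma gg_mul: "((\<alpha> - 2) * k) * gg u = u - 2 * k"
  unfolding gg_def using a2 kpos by simp

lemma ff_split:
  fixes a b x s :: real
  assumes ab: "a + b \<le> s" and xk: "x \<le> k"
  shows "ff (a + x) + ff (b + x) - x \<le> ff s"
proof -
  have "(\<alpha> - 1) * (a + b) \<le> (\<alpha> - 1) * s" using ab a2 by (intro mult_left_mono) auto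
  then have i1: "\<alpha> * a + \<alpha> * b - a - b \<le> \<alpha> * s - s" by (simp add: algebra_simps)
  have i2: "\<alpha> * x \<le> \<alpha> * k" using xk a2 by (intro mult_left_mono) auto
  have "(\<alpha> - 2) * (ff (a + x) + ff (b + x) - x) = (\<alpha> - 2) * ff (a + x) + (\<alpha> - 2) * ff (b + x) - (\<alpha> - 2) * x"
    by (simp add: algebra_simps)
  also have "\<dots> = (\<alpha> - 1) * (a + x) - \<alpha> * k + ((\<alpha> - 1) * (b + x) - \<alpha> * k) - (\<alpha> - 2) * x"
    by (simp only: ff_mul)
  also have "\<dots> \<le> (\<alpha> - 1) * s - \<alpha> * k" using i1 i2 by (simp add: algebra_simps)
  also have "\<dots> = (\<alpha> - 2) * ff s" by (simp only: ff_mul)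
  finally show ?thesis using a2 by simp
qed

lemma gg_split:
  fixes a b x s :: real
  assumes ab: "a + b \<le> s" and xk: "x \<le> k"
  shows "gg (a + x) + gg (b + x) \<le> gg s"
proof -
  have "((\<alpha> - 2) * k) * (gg (a + x) + gg (b + x)) = ((\<alpha> - 2) * k) * gg (a + x) + ((\<alpha> - 2) * k) * gg (b + x)"
    by (simp add: algebra_simps)
  also have "\<dots> = (a + x - 2 * k) + (b + x - 2 * k)" by (simp only: gg_mul)
  also have "\<dots> \<le> s - 2 * k" using ab xk by simp
  also have "\<dots> = ((\<alpha> - 2) * k) * gg s" by (simp only: gg_mul)
  finally have "((\<alpha> - 2) * k) * (gg (a + x) + gg (b + x)) \<le> ((\<alpha> - 2) * k) * gg s" .
  moreover have "(\<alpha> - 2) * k > 0" using a2 kpos by simp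
  ultimately show ?thesis by (rule mult_left_le_imp_le)
qed

lemma main:
  fixes V :: "'a set" and E :: "'a set set" and S :: "'a set" and F :: "nat set" and z :: nat
  assumes "sgraph V E" "treewidth_le V E (k - 1)" "max_degree_le V E (real d)" "S \<subseteq> V"
    "\<alpha> * k \<le> real (card S)" "real (card S) \<le> 3 * \<alpha> * k * d" "finite F" "z \<notin> F"
  shows "\<exists>(VT::nat set) ET B. tree_partition V E VT ET B \<and> VT \<inter> F = {} \<and> z \<in> VT
     \<and> width_le VT B (ff (3 * \<alpha> * k * d)) \<and> max_degree_le VT ET (gg (3 * \<alpha> * k * d) + 1)
     \<and> S \<subseteq> B z \<and> real (card (B z)) \<le> ff (card S) \<and> real (degree ET z) \<le> gg (card S)"
  using assms
proof (induction "card V" arbitrary: V E S F z rule: less_induct)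
  case less
  have sg: "sgraph V E" and tw: "treewidth_le V E (k - 1)" and md: "max_degree_le V E (real d)"
    and SV: "S \<subseteq> V" and slo: "\<alpha> * k \<le> real (card S)" and shi: "real (card S) \<le> 3 * \<alpha> * k * d"
    and finF: "finite F" and zF: "z \<notin> F" using less.prems by auto
  define s where "s = real (card S)"
  define Wm where "Wm = ff (3 * \<alpha> * k * d)"
  define Dm where "Dm = gg (3 * \<alpha> * k * d) + 1"
  have finV: "finite V" using sg unfolding sgraph_def by simp
  have finS: "finite S" using finV SV finite_subset by blast
  have akpos: "\<alpha> * k > 2"
  proof -
    have "\<alpha> * 1 \<le> \<alpha> * k" using a2 k1 by (intro mult_left_mono) auto
    then show ?thesis using a2 by linarith
  qed
  have Wm_ge: "3 * \<alpha> * k * d \<le> Wm" unfolding Wm_def using ff_ge ak_le by simp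
  have s_Wm: "s \<le> Wm" using ff_mono[OF shi] ff_ge[OF slo] unfolding Wm_def s_def by linarith
  have ffs: "s \<le> ff s" using ff_ge slo unfolding s_def by simp
  have ffs_Wm: "ff s \<le> Wm" using ff_mono[OF shi] unfolding Wm_def s_def by simp
  have Dm_ge: "1 \<le> Dm" unfolding Dm_def using gg_ge1[OF ak_le] by simp
  have ggs: "1 \<le> gg s" using gg_ge1 slo unfolding s_def by simp
  have ggs_Dm: "gg s \<le> Dm" using gg_mono[OF shi] unfolding Dm_def s_def by simp
  have Sne: "S \<noteq> {}" using slo akpos by auto
  show ?case
  proof (cases "s \<le> 3 * \<alpha> * k")
    case True
    define R where "R = V - S"
    define N where "N = {w\<in>R. \<exists>v\<in>S. {v, w} \<in> E}"
    have "N \<subseteq> {w. \<exists>v\<in>S. {v, w} \<in> E}" unfolding N_def by blast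
    moreover have "finite {w. \<exists>v\<in>S. {v, w} \<in> E}"
    proof (rule finite_subset[OF _ finV])
      show "{w. \<exists>v\<in>S. {v, w} \<in> E} \<subseteq> V" using sgraph_edge[OF sg] by blast
    qed
    ultimately have "card N \<le> card {w. \<exists>v\<in>S. {v, w} \<in> E}" by (rule card_mono[rotated])
    also have "\<dots> \<le> card S * d" by (rule nbr_bound[OF sg md SV])
    finally have "card N \<le> card S * d" .
    then have "real (card N) \<le> real (card S * d)" by (rule of_nat_mono)
    then have "real (card N) \<le> s * d" unfolding s_def by simp
    also have "\<dots> \<le> 3 * \<alpha> * k * d" using True by (intro mult_right_mono) auto
    finally have cN: "real (card N) \<le> 3 * \<alpha> * k * d" .
    have VSR: "V = S \<union> R" "S \<inter> R = {}" using SV unfolding R_def by auto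
    show ?thesis
    proof (cases "R = {}")
      case True
      then have VS: "V = S" using VSR by simp
      have "tree_partition V E {z} {} (\<lambda>_. V)" by (rule tp_single)
      moreover have "width_le {z} (\<lambda>_. V) Wm" unfolding width_le_def using s_Wm VS s_def by simp
      moreover have "max_degree_le {z} {} Dm" unfolding max_degree_le_def degree_def using Dm_ge by simp
      moreover have "real (degree {} z) \<le> gg (card S)" unfolding degree_def using ggs s_def by simp
      moreover have "{z} \<inter> F = {}" "z \<in> {z}" "S \<subseteq> (\<lambda>_. V) z" "real (card ((\<lambda>_. V) z)) \<le> ff (card S)"
        using zF ffs VS unfolding s_def by auto
      ultimately show ?thesis unfolding Wm_def Dm_def by blast
    next
      case Rne: False
      obtain r where r: "r \<notin> insert z F" using ex_new_if_finite[OF infinite_UNIV_nat] finF by (meson finite_insert)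
      define n0 where "n0 = nat \<lceil>\<alpha> * k\<rceil>"
      have n0: "\<alpha> * k \<le> real n0" "real n0 < \<alpha> * k + 1" unfolding n0_def using akpos by linarith+
      have sgR: "sgraph R (sub E R)" using sub_sgraph[OF sg] unfolding R_def by auto
      have nb: "\<forall>v w. {v, w} \<in> E \<longrightarrow> v \<in> S \<longrightarrow> w \<in> R \<longrightarrow> w \<in> N" unfolding N_def by blast
      define VTc where "VTc (VT' :: nat set) = VT' \<union> {z, r}" for VT'
      show ?thesis
      proof (cases "card R < n0")
        case True
        have TR: "tree_partition R (sub E R) {r} {} (\<lambda>_. R)" by (rule tp_single)
        define Bf where "Bf = (\<lambda>n. if n = z then S else (\<lambda>_. R) n)"
        have z': "z \<notin> {r}" using r by auto
        have nb': "\<forall>v w. {v, w} \<in> E \<longrightarrow> v \<in> S \<longrightarrow> w \<in> R \<longrightarrow> w \<in> (\<lambda>_. R) r" by simp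
        note att = tp_attach[OF TR _ z' nb' VSR sg Bf_def]
        have RW: "real (card R) \<le> Wm" using True n0 Wm_ge ak_le by linarith
        have "width_le ({r} \<union> {z, r}) Bf Wm" unfolding width_le_def
        proof
          fix n assume "n \<in> {r} \<union> {z, r}"
          then show "real (card (Bf n)) \<le> Wm" using s_Wm RW unfolding Bf_def s_def by auto
        qed
        moreover have "max_degree_le ({r} \<union> {z, r}) ({} \<union> {{z, r}}) Dm" unfolding max_degree_le_def
        proof
          fix n assume n: "n \<in> {r} \<union> {z, r}"
          have "real (degree ({} \<union> {{z, r}}) r) \<le> 1" using att(4) unfolding degree_def by simp
          then show "real (degree ({} \<union> {{z, r}}) n) \<le> Dm" using n att(5) Dm_ge by auto
        qed
        moreover have "({r} \<union> {z, r}) \<inter> F = {}" using r zF by auto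
        moreover have "z \<in> {r} \<union> {z, r}" "S \<subseteq> Bf z" "real (card (Bf z)) \<le> ff (card S)"
          "real (degree ({} \<union> {{z, r}}) z) \<le> gg (card S)"
          using att(5,6) ffs ggs unfolding s_def by auto
        ultimately show ?thesis using att(1) unfolding Wm_def Dm_def by blast
      next
        case False
        have finR: "finite R" using finV unfolding R_def by simp
        have NR: "N \<subseteq> R" unfolding N_def by blast
        have "n0 \<le> card R" using False by simp
        then obtain SR where SR: "N \<subseteq> SR" "SR \<subseteq> R" "card SR = max (card N) n0"
          using pad_set[OF finR NR] by blast
        have SRlo: "\<alpha> * k \<le> real (card SR)" using SR(3) n0 by simp
        have SRhi: "real (card SR) \<le> 3 * \<alpha> * k * d" using SR(3) n0 cN ak1_le by (auto simp: max_def)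
        have "R \<subset> V" unfolding R_def using Sne SV by blast
        then have lt: "card R < card V" using finV by (rule psubset_card_mono[rotated])
        have twR: "treewidth_le R (sub E R) (k - 1)" using sub_tw[OF sg tw] unfolding R_def by auto
        have mdR: "max_degree_le R (sub E R) (real d)" using sub_deg[OF sg md] unfolding R_def by auto
        have "\<exists>(VT::nat set) ET B. tree_partition R (sub E R) VT ET B \<and> VT \<inter> insert z F = {} \<and> r \<in> VT
           \<and> width_le VT B (ff (3 * \<alpha> * k * d)) \<and> max_degree_le VT ET (gg (3 * \<alpha> * k * d) + 1)
           \<and> SR \<subseteq> B r \<and> real (card (B r)) \<le> ff (card SR) \<and> real (degree ET r) \<le> gg (card SR)"
          by (rule less.hyps[OF lt sgR twR mdR SR(2) SRlo SRhi]) (use finF r in auto)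
        then obtain VT' ET' B' where T': "tree_partition R (sub E R) VT' ET' B'" "VT' \<inter> insert z F = {}" "r \<in> VT'"
           "width_le VT' B' Wm" "max_degree_le VT' ET' Dm"
           "SR \<subseteq> B' r" "real (card (B' r)) \<le> ff (card SR)" "real (degree ET' r) \<le> gg (card SR)"
          unfolding Wm_def Dm_def by blast
        have z': "z \<notin> VT'" using T'(2) by auto
        have nb': "\<forall>v w. {v, w} \<in> E \<longrightarrow> v \<in> S \<longrightarrow> w \<in> R \<longrightarrow> w \<in> B' r" using nb SR(1) T'(6) by blast
        define Bf where "Bf = (\<lambda>n. if n = z then S else B' n)"
        note att = tp_attach[OF T'(1) T'(3) z' nb' VSR sg Bf_def]
        have "width_le (VT' \<union> {z, r}) Bf Wm" unfolding width_le_def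
        proof
          fix n assume n: "n \<in> VT' \<union> {z, r}"
          show "real (card (Bf n)) \<le> Wm"
          proof (cases "n = z")
            case True then show ?thesis using s_Wm att(6) unfolding s_def by simp
          next
            case False
            then have "n \<in> VT'" using n T'(3) by auto
            then show ?thesis using T'(4) False unfolding width_le_def Bf_def by simp
          qed
        qed
        moreover have "max_degree_le (VT' \<union> {z, r}) (ET' \<union> {{z, r}}) Dm" unfolding max_degree_le_def
        proof
          fix n assume n: "n \<in> VT' \<union> {z, r}"
          show "real (degree (ET' \<union> {{z, r}}) n) \<le> Dm"
          proof (cases "n = z")
            case True then show ?thesis using att(5) Dm_ge by simp
          next
            case nz: False
            show ?thesis
            proof (cases "n = r")
              case True
              have "gg (card SR) \<le> gg (3 * \<alpha> * k * d)" using gg_mono[OF SRhi] .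
              moreover have "real (degree (ET' \<union> {{z, r}}) r) \<le> real (degree ET' r) + 1"
                using att(4) by (metis of_nat_1 of_nat_add of_nat_mono)
              ultimately show ?thesis using T'(8) unfolding Dm_def True by linarith
            next
              case False
              then have "n \<in> VT' - {r}" using n nz by auto
              then show ?thesis using att(2) T'(5) unfolding max_degree_le_def by simp
            qed
          qed
        qed
        moreover have "(VT' \<union> {z, r}) \<inter> F = {}" using T'(2) r zF by auto
        moreover have "z \<in> VT' \<union> {z, r}" "S \<subseteq> Bf z" "real (card (Bf z)) \<le> ff (card S)"
          "real (degree (ET' \<union> {{z, r}}) z) \<le> gg (card S)"
          using att(5,6) ffs ggs unfolding s_def by auto
        ultimately show ?thesis using att(1) unfolding Wm_def Dm_def by blast
      qed
    qed
  next
    case False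
    then have sbig: "3 * \<alpha> * k < s" by simp
    obtain VT0 :: "nat set" and ET0 W0 where td: "tree_decomposition V E VT0 ET0 W0"
      and bw: "\<forall>x\<in>VT0. card (W0 x) \<le> k - 1 + 1" using tw unfolding treewidth_le_def by blast
    have bag: "\<forall>x\<in>VT0. card (W0 x) \<le> k" using bw k1 by simp
    obtain X P Q where sep: "X \<subseteq> V" "card X \<le> k" "P \<union> Q \<union> X = V" "P \<inter> Q = {}" "P \<inter> X = {}" "Q \<inter> X = {}"
      "\<forall>v w. {v, w} \<in> E \<longrightarrow> v \<in> P \<longrightarrow> w \<notin> Q"
      "real (card (S \<inter> P)) \<le> 2 * real (card S) / 3" "real (card (S \<inter> Q)) \<le> 2 * real (card S) / 3"
      using separator[OF sg td bag SV] by blast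
    have finX: "finite X" using sep(1) finV finite_subset by blast
    define SA where "SA = (S \<inter> P) \<union> X"
    define SB where "SB = (S \<inter> Q) \<union> X"
    define a where "a = card (S \<inter> P)"
    define b where "b = card (S \<inter> Q)"
    define c where "c = card (S \<inter> X)"
    define x where "x = card X"
    have abc: "a + b + c = card S"
    proof -
      have "S = (S \<inter> P) \<union> (S \<inter> Q) \<union> (S \<inter> X)" using SV sep(3) by blast
      moreover have "card ((S \<inter> P) \<union> (S \<inter> Q)) = a + b" unfolding a_def b_def
        using finS sep(4) by (intro card_Un_disjoint) auto
      moreover have "card ((S \<inter> P) \<union> (S \<inter> Q) \<union> (S \<inter> X)) = card ((S \<inter> P) \<union> (S \<inter> Q)) + c" unfolding c_def
        using finS sep(5,6) by (intro card_Un_disjoint) auto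
      ultimately show ?thesis by simp
    qed
    have cx: "c \<le> x" unfolding c_def x_def using finX by (intro card_mono) auto
    have xk: "x \<le> k" using sep(2) unfolding x_def .
    have cSA: "card SA = a + x" unfolding SA_def a_def x_def using finS finX sep(5) by (intro card_Un_disjoint) auto
    have cSB: "card SB = b + x" unfolding SB_def b_def x_def using finS finX sep(6) by (intro card_Un_disjoint) auto
    have ra: "real a \<le> 2 * s / 3" and rb: "real b \<le> 2 * s / 3" using sep(8,9) unfolding a_def b_def s_def by auto
    have rabc: "real a + real b + real c = s" using abc unfolding s_def by (metis of_nat_add)
    have rcx: "real c \<le> real x" using cx by simp
    have rxk: "real x \<le> real k" using xk by simp
    have klak: "real k \<le> \<alpha> * k" using a2 kpos by (simp add: mult_right_mono)
    have kd: "real k \<le> \<alpha> * k * d" by (rule k_le)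
    have shi': "s \<le> 3 * \<alpha> * k * d" using shi unfolding s_def .
    have SAlo: "\<alpha> * k \<le> real (card SA)" using cSA ra rb rabc rcx sbig by simp
    have SBlo: "\<alpha> * k \<le> real (card SB)" using cSB ra rb rabc rcx sbig by simp
    have SAhi: "real (card SA) \<le> 3 * \<alpha> * k * d" using cSA ra rxk kd shi' by simp
    have SBhi: "real (card SB) \<le> 3 * \<alpha> * k * d" using cSB rb rxk kd shi' by simp
    have bpos: "real b > 0" using ra rabc rcx rxk sbig klak a2 kpos by linarith
    have apos: "real a > 0" using rb rabc rcx rxk sbig klak a2 kpos by linarith
    have Qne: "S \<inter> Q \<noteq> {}" using bpos unfolding b_def by auto
    have Pne: "S \<inter> P \<noteq> {}" using apos unfolding a_def by auto
    have AV: "P \<union> X \<subseteq> V" and BV: "Q \<union> X \<subseteq> V" using sep(3) by auto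
    have ltA: "card (P \<union> X) < card V"
    proof -
      have "P \<union> X \<subset> V" using AV Qne sep(3,4,6) by blast
      then show ?thesis using finV by (rule psubset_card_mono[rotated])
    qed
    have ltB: "card (Q \<union> X) < card V"
    proof -
      have "Q \<union> X \<subset> V" using BV Pne sep(3,4,5) by blast
      then show ?thesis using finV by (rule psubset_card_mono[rotated])
    qed
    have SAA: "SA \<subseteq> P \<union> X" unfolding SA_def by blast
    have SBB: "SB \<subseteq> Q \<union> X" unfolding SB_def by blast
    have "\<exists>(VT::nat set) ET B. tree_partition (P \<union> X) (sub E (P \<union> X)) VT ET B \<and> VT \<inter> F = {} \<and> z \<in> VT
       \<and> width_le VT B (ff (3 * \<alpha> * k * d)) \<and> max_degree_le VT ET (gg (3 * \<alpha> * k * d) + 1)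
       \<and> SA \<subseteq> B z \<and> real (card (B z)) \<le> ff (card SA) \<and> real (degree ET z) \<le> gg (card SA)"
      by (rule less.hyps[OF ltA sub_sgraph[OF sg AV] sub_tw[OF sg tw AV] sub_deg[OF sg md AV] SAA SAlo SAhi finF zF])
    then obtain VTA ETA BA where TA: "tree_partition (P \<union> X) (sub E (P \<union> X)) VTA ETA BA" "VTA \<inter> F = {}" "z \<in> VTA"
       "width_le VTA BA Wm" "max_degree_le VTA ETA Dm"
       "SA \<subseteq> BA z" "real (card (BA z)) \<le> ff (card SA)" "real (degree ETA z) \<le> gg (card SA)"
      unfolding Wm_def Dm_def by blast
    have finVTA: "finite VTA" using TA(1) unfolding tree_partition_def is_tree_def sgraph_def by simp
    define F' where "F' = F \<union> (VTA - {z})"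
    have finF': "finite F'" unfolding F'_def using finF finVTA by simp
    have zF': "z \<notin> F'" unfolding F'_def using zF by simp
    have "\<exists>(VT::nat set) ET B. tree_partition (Q \<union> X) (sub E (Q \<union> X)) VT ET B \<and> VT \<inter> F' = {} \<and> z \<in> VT
       \<and> width_le VT B (ff (3 * \<alpha> * k * d)) \<and> max_degree_le VT ET (gg (3 * \<alpha> * k * d) + 1)
       \<and> SB \<subseteq> B z \<and> real (card (B z)) \<le> ff (card SB) \<and> real (degree ET z) \<le> gg (card SB)"
      by (rule less.hyps[OF ltB sub_sgraph[OF sg BV] sub_tw[OF sg tw BV] sub_deg[OF sg md BV] SBB SBlo SBhi finF' zF'])
    then obtain VTB ETB BB where TB: "tree_partition (Q \<union> X) (sub E (Q \<union> X)) VTB ETB BB" "VTB \<inter> F' = {}" "z \<in> VTB"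
       "width_le VTB BB Wm" "max_degree_le VTB ETB Dm"
       "SB \<subseteq> BB z" "real (card (BB z)) \<le> ff (card SB)" "real (degree ETB z) \<le> gg (card SB)"
      unfolding Wm_def Dm_def by blast
    have int: "VTA \<inter> VTB = {z}" using TA(3) TB(2,3) unfolding F'_def by blast
    have XA: "X \<subseteq> BA z" using TA(6) unfolding SA_def by blast
    have XB: "X \<subseteq> BB z" using TB(6) unfolding SB_def by blast
    define Bf where "Bf = (\<lambda>n. if n = z then BA z \<union> BB z else if n \<in> VTA then BA n else BB n)"
    have Vd: "V = P \<union> Q \<union> X" using sep(3) by simp
    note mg = tp_merge[OF TA(1) TB(1) int XA XB Vd sep(4,5,6) sg sep(7) Bf_def]
    have Bfz: "Bf z = BA z \<union> BB z" unfolding Bf_def by simp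
    have cz: "real (card (Bf z)) \<le> ff s"
    proof -
      have "real (card (Bf z)) + real x \<le> real (card (BA z)) + real (card (BB z))"
        using mg(5) unfolding x_def by (metis of_nat_add of_nat_mono)
      also have "\<dots> \<le> ff (real a + real x) + ff (real b + real x)" using TA(7) TB(7) cSA cSB by simp
      finally have "real (card (Bf z)) \<le> ff (real a + real x) + ff (real b + real x) - real x" by simp
      also have "\<dots> \<le> ff s" using ff_split[of "real a" "real b" s "real x"] rabc rxk by simp
      finally show ?thesis .
    qed
    have dz: "real (degree (ETA \<union> ETB) z) \<le> gg s"
    proof -
      have "real (degree (ETA \<union> ETB) z) \<le> real (degree ETA z) + real (degree ETB z)"
        using mg(4) by (metis of_nat_add of_nat_mono)
      also have "\<dots> \<le> gg (real a + real x) + gg (real b + real x)" using TA(8) TB(8) cSA cSB by simp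
      also have "\<dots> \<le> gg s" using gg_split[of "real a" "real b" s "real x"] rabc rxk by simp
      finally show ?thesis .
    qed
    have "width_le (VTA \<union> VTB) Bf Wm" unfolding width_le_def
    proof
      fix n assume n: "n \<in> VTA \<union> VTB"
      show "real (card (Bf n)) \<le> Wm"
      proof (cases "n = z")
        case True then show ?thesis using cz ffs_Wm by simp
      next
        case False
        show ?thesis
        proof (cases "n \<in> VTA")
          case True then show ?thesis using mg(2)[of n] False TA(4) unfolding width_le_def by simp
        next
          case nA: False
          then have "n \<in> VTB - {z}" using n False by simp
          then show ?thesis using mg(3)[of n] TB(4) unfolding width_le_def by simp
        qed
      qed
    qed
    moreover have "max_degree_le (VTA \<union> VTB) (ETA \<union> ETB) Dm" unfolding max_degree_le_def
    proof
      fix n assume n: "n \<in> VTA \<union> VTB"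
      show "real (degree (ETA \<union> ETB) n) \<le> Dm"
      proof (cases "n = z")
        case True then show ?thesis using dz ggs_Dm by simp
      next
        case False
        show ?thesis
        proof (cases "n \<in> VTA")
          case True then show ?thesis using mg(2)[of n] False TA(5) unfolding max_degree_le_def by simp
        next
          case nA: False
          then have "n \<in> VTB - {z}" using n False by simp
          then show ?thesis using mg(3)[of n] TB(5) unfolding max_degree_le_def by simp
        qed
      qed
    qed
    moreover have "(VTA \<union> VTB) \<inter> F = {}" using TA(2) TB(2) unfolding F'_def by blast
    moreover have "z \<in> VTA \<union> VTB" using TA(3) by simp
    moreover have "S \<subseteq> Bf z"
    proof -
      have "S \<subseteq> SA \<union> SB" unfolding SA_def SB_def using SV sep(3) by blast
      then show ?thesis using TA(6) TB(6) Bfz by blast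
    qed
    moreover have "real (card (Bf z)) \<le> ff (card S)" using cz unfolding s_def .
    moreover have "real (degree (ETA \<union> ETB) z) \<le> gg (card S)" using dz unfolding s_def .
    ultimately show ?thesis using mg(1) unfolding Wm_def Dm_def by blast
  qed
qed

lemma lemma5_ctx:
  fixes V :: "'a set" and E :: "'a set set"
  assumes sg: "sgraph V E" and tw: "treewidth_le V E (k - 1)" and md: "max_degree_le V E (real d)"
  shows "(\<exists>(VT :: nat set) ET B. tree_partition V E VT ET B
            \<and> width_le VT B (3 * \<alpha> * (\<alpha> - 1) / (\<alpha> - 2) * k * d - \<alpha> / (\<alpha> - 2) * k)
            \<and> max_degree_le VT ET (3 * \<alpha> / (\<alpha> - 2) * d + (\<alpha> - 4) / (\<alpha> - 2)))
       \<and> (\<forall>S. S \<subseteq> V \<and> \<alpha> * k \<le> real (card S) \<and> real (card S) \<le> 3 * \<alpha> * k * d \<longrightarrow>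
            (\<exists>(VT :: nat set) ET B. tree_partition V E VT ET B
              \<and> width_le VT B (3 * \<alpha> * (\<alpha> - 1) / (\<alpha> - 2) * k * d - \<alpha> / (\<alpha> - 2) * k)
              \<and> max_degree_le VT ET (3 * \<alpha> / (\<alpha> - 2) * d + (\<alpha> - 4) / (\<alpha> - 2))
              \<and> (\<exists>z\<in>VT. S \<subseteq> B z
                   \<and> real (card (B z)) \<le> (\<alpha> - 1) / (\<alpha> - 2) * card S - \<alpha> / (\<alpha> - 2) * k
                   \<and> real (degree ET z) \<le> 1 / ((\<alpha> - 2) * k) * card S - 2 / (\<alpha> - 2))))"
proof -
  have part2: "\<exists>(VT :: nat set) ET B. tree_partition V E VT ET B
              \<and> width_le VT B (3 * \<alpha> * (\<alpha> - 1) / (\<alpha> - 2) * k * d - \<alpha> / (\<alpha> - 2) * k)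
              \<and> max_degree_le VT ET (3 * \<alpha> / (\<alpha> - 2) * d + (\<alpha> - 4) / (\<alpha> - 2))
              \<and> (\<exists>z\<in>VT. S \<subseteq> B z
                   \<and> real (card (B z)) \<le> (\<alpha> - 1) / (\<alpha> - 2) * card S - \<alpha> / (\<alpha> - 2) * k
                   \<and> real (degree ET z) \<le> 1 / ((\<alpha> - 2) * k) * card S - 2 / (\<alpha> - 2))"
    if S: "S \<subseteq> V" "\<alpha> * k \<le> real (card S)" "real (card S) \<le> 3 * \<alpha> * k * d" for S
  proof -
    obtain VT ET B where T: "tree_partition V E VT ET B" "VT \<inter> {} = {}" "(0::nat) \<in> VT"
     "width_le VT B (ff (3 * \<alpha> * k * d))" "max_degree_le VT ET (gg (3 * \<alpha> * k * d) + 1)"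
     "S \<subseteq> B 0" "real (card (B 0)) \<le> ff (card S)" "real (degree ET 0) \<le> gg (card S)"
      using main[OF sg tw md S, of "{}" 0] by blast
    have T4: "width_le VT B (3 * \<alpha> * (\<alpha> - 1) / (\<alpha> - 2) * k * d - \<alpha> / (\<alpha> - 2) * k)"
      using T(4) unfolding Wd_eq .
    have T5: "max_degree_le VT ET (3 * \<alpha> / (\<alpha> - 2) * d + (\<alpha> - 4) / (\<alpha> - 2))"
      using T(5) unfolding Dg_eq .
    show ?thesis using T(1,3,6) T4 T5 T(7,8)[unfolded ff_eq gg_eq] by blast
  qed
  have part1: "\<exists>(VT :: nat set) ET B. tree_partition V E VT ET B
            \<and> width_le VT B (3 * \<alpha> * (\<alpha> - 1) / (\<alpha> - 2) * k * d - \<alpha> / (\<alpha> - 2) * k)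
            \<and> max_degree_le VT ET (3 * \<alpha> / (\<alpha> - 2) * d + (\<alpha> - 4) / (\<alpha> - 2))"
  proof -
    define n0 where "n0 = nat \<lceil>\<alpha> * k\<rceil>"
    have akpos: "\<alpha> * k > 2"
    proof -
      have "\<alpha> * 1 \<le> \<alpha> * k" using a2 k1 by (intro mult_left_mono) auto
      then show ?thesis using a2 by linarith
    qed
    have n0: "\<alpha> * k \<le> real n0" "real n0 < \<alpha> * k + 1" unfolding n0_def using akpos by linarith+
    show ?thesis
    proof (cases "n0 \<le> card V")
      case True
      then obtain S where S: "S \<subseteq> V" "card S = n0" by (meson obtain_subset_with_card_n)
      have "\<alpha> * k \<le> real (card S)" "real (card S) \<le> 3 * \<alpha> * k * d" using S(2) n0 ak1_le by auto
      then show ?thesis using part2[OF S(1)] by blast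
    next
      case False
      have "real (card V) \<le> ff (3 * \<alpha> * k * d)"
        using False n0 ff_ge[OF ak_le] ak_le by linarith
      then have w: "width_le {0::nat} (\<lambda>_. V) (ff (3 * \<alpha> * k * d))" unfolding width_le_def by simp
      have "1 \<le> gg (3 * \<alpha> * k * d)" using gg_ge1[OF ak_le] .
      then have m: "max_degree_le {0::nat} {} (gg (3 * \<alpha> * k * d) + 1)" unfolding max_degree_le_def degree_def by simp
      show ?thesis using tp_single[of V E "0::nat"] w m unfolding Wd_eq Dg_eq by blast
    qed
  qed
  show ?thesis using part1 part2 by blast
qed

end

theorem lemma5:
  fixes V :: "'a set" and E :: "'a set set" and k d :: nat and \<alpha> :: real
  assumes "k \<ge> 1" and "d \<ge> 1" and "\<alpha> > 2"
    and "sgraph V E"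
    and "treewidth_le V E (k - 1)"
    and "max_degree_le V E (real d)"
  shows "(\<exists>(VT :: nat set) ET B. tree_partition V E VT ET B
            \<and> width_le VT B (3 * \<alpha> * (\<alpha> - 1) / (\<alpha> - 2) * k * d - \<alpha> / (\<alpha> - 2) * k)
            \<and> max_degree_le VT ET (3 * \<alpha> / (\<alpha> - 2) * d + (\<alpha> - 4) / (\<alpha> - 2)))
       \<and> (\<forall>S. S \<subseteq> V \<and> \<alpha> * k \<le> real (card S) \<and> real (card S) \<le> 3 * \<alpha> * k * d \<longrightarrow>
            (\<exists>(VT :: nat set) ET B. tree_partition V E VT ET B
              \<and> width_le VT B (3 * \<alpha> * (\<alpha> - 1) / (\<alpha> - 2) * k * d - \<alpha> / (\<alpha> - 2) * k)
              \<and> max_degree_le VT ET (3 * \<alpha> / (\<alpha> - 2) * d + (\<alpha> - 4) / (\<alpha> - 2))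
              \<and> (\<exists>z\<in>VT. S \<subseteq> B z
                   \<and> real (card (B z)) \<le> (\<alpha> - 1) / (\<alpha> - 2) * card S - \<alpha> / (\<alpha> - 2) * k
                   \<and> real (degree ET z) \<le> 1 / ((\<alpha> - 2) * k) * card S - 2 / (\<alpha> - 2))))"
  by (rule lemma5_ctx[OF assms])

end
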